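(* Let $a$ be a positive integer, let $G$ be a finite simple graph of arboricity at most $a$ containing no isolated edges, and let $p_1<p_2<\cdots<p_a$ be the first $a$ prime numbers larger than $3$. Then ${\chi^\Sigma_g}^\star(G)\leq p_1p_2\cdots p_a$.
   Context: The arboricity of $G$ is the least number of forests into which $E(G)$ can be decomposed; an isolated edge is a connected component isomorphic to $K_2$. For an Abelian group $\mathcal{G}$ with identity $0$ and $f\colon E(G)\to\mathcal{G}$, $w_f(v)=\sum_{u\in N(v)}f(uv)$. ${\chi^\Sigma_g}^\star(G)$ is the least positive integer $k$ such that for every Abelian group $\mathcal{G}$ of order $k$ there exists $f\colon E(G)\to\mathcal{G}\setminus\{0\}$ with $w_f(u)\neq w_f(v)$ for every edge $uv$. *)

theory Defs
  imports "HOL-Algebra.Algebra" "HOL-Computational_Algebra.Primes"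
begin

definition simple_graph :: "'v set \<Rightarrow> 'v set set \<Rightarrow> bool" where
  "simple_graph V E \<longleftrightarrow> finite V \<and>
     (\<forall>e\<in>E. \<exists>u v. e = {u, v} \<and> u \<noteq> v \<and> u \<in> V \<and> v \<in> V)"

definition has_cycle :: "'v set set \<Rightarrow> bool" where
  "has_cycle F \<longleftrightarrow> (\<exists>vs. length vs \<ge> 3 \<and> distinct vs \<and>
      (\<forall>i < length vs. {vs ! i, vs ! ((i + 1) mod length vs)} \<in> F))"

definition forest :: "'v set set \<Rightarrow> bool" where
  "forest F \<longleftrightarrow> \<not> has_cycle F"

definition forest_decomposition :: "'v set set \<Rightarrow> nat \<Rightarrow> bool" where
  "forest_decomposition E k \<longleftrightarrow> (\<exists>Fs :: nat \<Rightarrow> 'v set set.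
      (\<Union>i<k. Fs i) = E \<and> (\<forall>i<k. forest (Fs i)) \<and>
      (\<forall>i<k. \<forall>j<k. i \<noteq> j \<longrightarrow> Fs i \<inter> Fs j = {}))"

definition arboricity :: "'v set set \<Rightarrow> nat" where
  "arboricity E = (LEAST k. forest_decomposition E k)"

text \<open>An isolated edge is a component isomorphic to K2: an edge sharing no endpoint
  with any other edge.\<close>
definition no_isolated_edges :: "'v set set \<Rightarrow> bool" where
  "no_isolated_edges E \<longleftrightarrow> (\<forall>e\<in>E. \<exists>e'\<in>E. e' \<noteq> e \<and> e \<inter> e' \<noteq> {})"

text \<open>Weighted degree w_f(v) = sum of f over edges incident to v (group written
  multiplicatively in HOL-Algebra).\<close>
definition wsum :: "('b, 'm) monoid_scheme \<Rightarrow> 'v set set \<Rightarrow> ('v set \<Rightarrow> 'b) \<Rightarrow> 'v \<Rightarrow> 'b" where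
  "wsum Gr E f v = finprod Gr f {e \<in> E. v \<in> e}"

definition group_sum_colourable :: "('b, 'm) monoid_scheme \<Rightarrow> 'v set set \<Rightarrow> bool" where
  "group_sum_colourable Gr E \<longleftrightarrow> (\<exists>f. (\<forall>e\<in>E. f e \<in> carrier Gr - {\<one>\<^bsub>Gr\<^esub>}) \<and>
      (\<forall>u v. {u, v} \<in> E \<longrightarrow> u \<noteq> v \<longrightarrow> wsum Gr E f u \<noteq> wsum Gr E f v))"

text \<open>Every finite group is
  isomorphic to one whose carrier consists of natural numbers, so quantifying over
  groups with carrier in nat covers all Abelian groups of order k up to isomorphism.\<close>
definition all_groups_of_order_work :: "'v set set \<Rightarrow> nat \<Rightarrow> bool" where
  "all_groups_of_order_work E k \<longleftrightarrow> (\<forall>Gr :: nat monoid.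
      comm_group Gr \<longrightarrow> finite (carrier Gr) \<longrightarrow> card (carrier Gr) = k \<longrightarrow>
      group_sum_colourable Gr E)"

definition chi_sigma_g_star :: "'v set set \<Rightarrow> nat" where
  "chi_sigma_g_star E = (LEAST k. 0 < k \<and> all_groups_of_order_work E k)"

definition first_primes_gt3 :: "nat \<Rightarrow> nat set" where
  "first_primes_gt3 a = {p. Factorial_Ring.prime p \<and> 3 < p \<and> card {q. Factorial_Ring.prime q \<and> 3 < q \<and> q < p} < a}"

end

theory Submission
  imports Defs
begin

locale oddgrp = comm_group G for G (structure) +
  assumes finG: "finite (carrier G)" and oddG: "odd (card (carrier G))"
begin

lemma sq_inj:
  assumes "x \<in> carrier G" "y \<in> carrier G" "x \<otimes> x = y \<otimes> y"
  shows "x = y"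
proof -
  define z where "z = x \<otimes> inv y"
  have zc: "z \<in> carrier G" using assms by (simp add: z_def)
  have "z \<otimes> z = (x \<otimes> x) \<otimes> (inv y \<otimes> inv y)" using assms(1,2)
    by (simp add: z_def m_ac)
  also have "\<dots> = (y \<otimes> y) \<otimes> (inv y \<otimes> inv y)" using assms(3) by simp
  also have "\<dots> = \<one>" using assms(2) by (metis m_assoc m_closed inv_closed r_inv r_one)
  finally have zz: "z \<otimes> z = \<one>" .
  obtain m where m: "order G = Suc (2*m)" using oddG unfolding order_def
    by (metis oddE Suc_eq_plus1)
  have "z [^] order G = \<one>" using pow_order_eq_1 zc by blast
  also have "z [^] order G = (z [^] (2::nat)) [^] m \<otimes> z"
    using zc m by (simp add: nat_pow_pow nat_pow_Suc)
  also have "z [^] (2::nat) = \<one>" using zz zc by (simp add: numeral_2_eq_2 nat_pow_Suc)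
  finally have "z = \<one>" using zc by simp
  thus ?thesis using assms unfolding z_def
    by (metis inv_closed inv_equality r_inv inv_inv)
qed

lemma sq_card:
  "card {u \<in> carrier G. u \<otimes> u = K} \<le> 1"
proof -
  have "finite {u \<in> carrier G. u \<otimes> u = K}" using finG by simp
  thus ?thesis using sq_inj by (auto simp: card_le_Suc0_iff_eq One_nat_def)
qed

lemma avoid:
  assumes "finite S" "card S < card (carrier G)"
  shows "\<exists>z\<in>carrier G. z \<notin> S"
proof (rule ccontr)
  assume "\<not> ?thesis"
  hence "carrier G \<subseteq> S" by auto
  hence "card (carrier G) \<le> card S" using assms card_mono by blast
  thus False using assms by simp
qed

end

lemma card_insert_Suc: "finite A \<Longrightarrow> card (insert x A) \<le> Suc (card A)"
  by (simp add: card_insert_if)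

context oddgrp begin
lemma cancel_helper:
  assumes "B \<in> carrier G" "\<sigma> \<in> carrier G" "P \<in> carrier G" "u \<in> carrier G"
  shows "B \<otimes> (u \<otimes> ((inv B \<otimes> \<sigma> \<otimes> inv P) \<otimes> inv u \<otimes> P)) = \<sigma>"
proof -
  define Q where "Q = inv B \<otimes> \<sigma> \<otimes> inv P"
  have Qc: "Q \<in> carrier G" using assms by (simp add: Q_def)
  have 1: "Q \<otimes> inv u \<otimes> P = (Q \<otimes> P) \<otimes> inv u"
    using assms Qc by (simp add: m_assoc m_comm[of "inv u" P])
  have 2: "u \<otimes> ((Q \<otimes> P) \<otimes> inv u) = Q \<otimes> P"
    using assms Qc by (simp add: m_comm[of "Q \<otimes> P" "inv u"] m_assoc[symmetric])
  have 3: "Q \<otimes> P = inv B \<otimes> \<sigma>"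
    using assms unfolding Q_def by (simp add: m_assoc)
  have 4: "B \<otimes> (inv B \<otimes> \<sigma>) = \<sigma>"
    using assms by (simp add: m_assoc[symmetric])
  show ?thesis using 1 2 3 4 unfolding Q_def[symmetric] by simp
qed
end

locale choice_ctx = oddgrp G for G (structure) +
  fixes Y :: "'v set" and crit :: "'v set" and c :: "'v \<Rightarrow> 'a" and T :: "'v \<Rightarrow> 'a set"
    and PP :: "('v \<times> 'v) set" and b :: "'v \<Rightarrow> 'v \<Rightarrow> 'a" and cc :: "'v \<Rightarrow> 'v \<Rightarrow> 'a"
    and B :: 'a and bs :: "'a set" and D :: nat
  assumes Yfin: "finite Y" and Yne: "Y \<noteq> {}"
    and nD: "2*D+3 \<le> card (carrier G)" and D1: "1 \<le> D"
    and Bc: "B \<in> carrier G" and bsfin: "finite bs" and bscard: "card bs \<le> D"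
    and critY: "crit \<subseteq> Y"
    and cT: "\<And>y. y \<in> crit \<Longrightarrow> c y \<in> carrier G \<and> finite (T y) \<and> card (T y) \<le> D - 1"
    and PPax: "\<And>v s. (v,s) \<in> PP \<Longrightarrow> v \<noteq> s \<and> (v \<in> Y \<or> s \<in> Y) \<and> v \<notin> crit \<and> s \<notin> crit
                 \<and> b v s \<in> carrier G \<and> cc v s \<in> carrier G"
    and uniq: "\<And>v s v' s' y. (v,s) \<in> PP \<Longrightarrow> (v',s') \<in> PP \<Longrightarrow> y \<in> Y \<Longrightarrow> y \<in> {v,s}
                 \<Longrightarrow> y \<in> {v',s'} \<Longrightarrow> v = v' \<and> s = s'"
    and single: "\<And>y. Y = {y} \<Longrightarrow> y \<in> crit \<Longrightarrow> c y \<noteq> B"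
begin

definition bad :: "'a \<Rightarrow> 'v \<Rightarrow> 'a \<Rightarrow> bool" where
  "bad \<sigma> y z \<longleftrightarrow> z = \<one> \<or> (y \<in> crit \<and> (c y \<otimes> z = \<sigma> \<or> c y \<otimes> z \<in> T y))
     \<or> (\<exists>s. (y,s) \<in> PP \<and> s \<notin> Y \<and> z \<otimes> b y s = cc y s)
     \<or> (\<exists>v. (v,y) \<in> PP \<and> v \<notin> Y \<and> b v y = z \<otimes> cc v y)"

definition bad0 :: "'v \<Rightarrow> 'a \<Rightarrow> bool" where
  "bad0 y z \<longleftrightarrow> z = \<one> \<or> (y \<in> crit \<and> c y \<otimes> z \<in> T y)
     \<or> (\<exists>s. (y,s) \<in> PP \<and> s \<notin> Y \<and> z \<otimes> b y s = cc y s)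
     \<or> (\<exists>v. (v,y) \<in> PP \<and> v \<notin> Y \<and> b v y = z \<otimes> cc v y)"

lemma finsub: "finite {z \<in> carrier G. P z}"
  using finG by simp

lemma pairpart_card:
  assumes "y \<in> Y"
  shows "card {z \<in> carrier G. (\<exists>s. (y,s) \<in> PP \<and> s \<notin> Y \<and> z \<otimes> b y s = cc y s)
     \<or> (\<exists>v. (v,y) \<in> PP \<and> v \<notin> Y \<and> b v y = z \<otimes> cc v y)} \<le> 1"
proof -
  have "\<forall>z1 \<in> {z \<in> carrier G. (\<exists>s. (y,s) \<in> PP \<and> s \<notin> Y \<and> z \<otimes> b y s = cc y s)
     \<or> (\<exists>v. (v,y) \<in> PP \<and> v \<notin> Y \<and> b v y = z \<otimes> cc v y)}.
     \<forall>z2 \<in> {z \<in> carrier G. (\<exists>s. (y,s) \<in> PP \<and> s \<notin> Y \<and> z \<otimes> b y s = cc y s)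
     \<or> (\<exists>v. (v,y) \<in> PP \<and> v \<notin> Y \<and> b v y = z \<otimes> cc v y)}. z1 = z2"
  proof (intro ballI)
    fix z1 z2 assume z1: "z1 \<in> {z \<in> carrier G. (\<exists>s. (y,s) \<in> PP \<and> s \<notin> Y \<and> z \<otimes> b y s = cc y s)
     \<or> (\<exists>v. (v,y) \<in> PP \<and> v \<notin> Y \<and> b v y = z \<otimes> cc v y)}"
      and z2: "z2 \<in> {z \<in> carrier G. (\<exists>s. (y,s) \<in> PP \<and> s \<notin> Y \<and> z \<otimes> b y s = cc y s)
     \<or> (\<exists>v. (v,y) \<in> PP \<and> v \<notin> Y \<and> b v y = z \<otimes> cc v y)}"
    have c1: "z1 \<in> carrier G" "z2 \<in> carrier G" using z1 z2 by auto
    show "z1 = z2"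
    proof (cases "\<exists>s. (y,s) \<in> PP \<and> s \<notin> Y \<and> z1 \<otimes> b y s = cc y s")
      case True
      then obtain s1 where s1: "(y,s1) \<in> PP" "z1 \<otimes> b y s1 = cc y s1" by auto
      show ?thesis
      proof (cases "\<exists>s. (y,s) \<in> PP \<and> s \<notin> Y \<and> z2 \<otimes> b y s = cc y s")
        case True
        then obtain s2 where s2: "(y,s2) \<in> PP" "z2 \<otimes> b y s2 = cc y s2" by auto
        have "s1 = s2" using uniq[OF s1(1) s2(1) assms] by auto
        hence "z1 \<otimes> b y s1 = z2 \<otimes> b y s1" using s1 s2 by simp
        thus ?thesis using c1 PPax[OF s1(1)] by simp
      next
        case False
        then obtain v2 where v2: "(v2,y) \<in> PP" using z2 by auto
        have "y = v2 \<and> s1 = y" using uniq[OF s1(1) v2 assms] by auto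
        thus ?thesis using PPax[OF s1(1)] by auto
      qed
    next
      case False
      then obtain v1 where v1: "(v1,y) \<in> PP" "b v1 y = z1 \<otimes> cc v1 y" using z1 by auto
      show ?thesis
      proof (cases "\<exists>s. (y,s) \<in> PP \<and> s \<notin> Y \<and> z2 \<otimes> b y s = cc y s")
        case True
        then obtain s2 where s2: "(y,s2) \<in> PP" by auto
        have "v1 = y \<and> y = s2" using uniq[OF v1(1) s2 assms] by auto
        thus ?thesis using PPax[OF s2] by auto
      next
        case False
        then obtain v2 where v2: "(v2,y) \<in> PP" "b v2 y = z2 \<otimes> cc v2 y" using z2 by auto
        have "v1 = v2" using uniq[OF v1(1) v2(1) assms] by auto
        hence "z1 \<otimes> cc v1 y = z2 \<otimes> cc v1 y" using v1 v2 by simp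
        thus ?thesis using c1 PPax[OF v1(1)] by simp
      qed
    qed
  qed
  moreover have "finite {z \<in> carrier G. (\<exists>s. (y,s) \<in> PP \<and> s \<notin> Y \<and> z \<otimes> b y s = cc y s)
     \<or> (\<exists>v. (v,y) \<in> PP \<and> v \<notin> Y \<and> b v y = z \<otimes> cc v y)}" by (rule finsub)
  ultimately have "card {z \<in> carrier G. (\<exists>s. (y,s) \<in> PP \<and> s \<notin> Y \<and> z \<otimes> b y s = cc y s)
     \<or> (\<exists>v. (v,y) \<in> PP \<and> v \<notin> Y \<and> b v y = z \<otimes> cc v y)} \<le> Suc 0"
    by (intro card_le_Suc0_iff_eq[THEN iffD2])
  thus ?thesis by simp
qed

lemma bad_card:
  assumes "y \<in> Y"
  shows "card {z \<in> carrier G. bad \<sigma> y z} \<le> D + 1"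
proof (cases "y \<in> crit")
  case True
  have cy: "c y \<in> carrier G" "finite (T y)" "card (T y) \<le> D - 1" using cT[OF True] by auto
  have noPP: "\<not> (\<exists>s. (y,s) \<in> PP)" "\<not> (\<exists>v. (v,y) \<in> PP)" using PPax True by blast+
  have sub: "{z \<in> carrier G. bad \<sigma> y z} \<subseteq>
      insert \<one> (insert (inv (c y) \<otimes> \<sigma>) ((\<lambda>t. inv (c y) \<otimes> t) ` T y))"
  proof
    fix z assume z: "z \<in> {z \<in> carrier G. bad \<sigma> y z}"
    hence zc: "z \<in> carrier G" and bz: "bad \<sigma> y z" by auto
    have e: "z = inv (c y) \<otimes> (c y \<otimes> z)" using zc cy
      by (simp add: m_assoc[symmetric])
    show "z \<in> insert \<one> (insert (inv (c y) \<otimes> \<sigma>) ((\<lambda>t. inv (c y) \<otimes> t) ` T y))"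
    proof -
      have "z = \<one> \<or> c y \<otimes> z = \<sigma> \<or> c y \<otimes> z \<in> T y"
        using bz noPP True unfolding bad_def by blast
      moreover have "c y \<otimes> z = \<sigma> \<Longrightarrow> z = inv (c y) \<otimes> \<sigma>" using e by simp
      moreover have "c y \<otimes> z \<in> T y \<Longrightarrow> z \<in> (\<lambda>t. inv (c y) \<otimes> t) ` T y"
        using e by (intro image_eqI) 
      ultimately show ?thesis by blast
    qed
  qed
  have "card {z \<in> carrier G. bad \<sigma> y z} \<le>
      card (insert \<one> (insert (inv (c y) \<otimes> \<sigma>) ((\<lambda>t. inv (c y) \<otimes> t) ` T y)))"
    by (rule card_mono) (use cy sub in auto)
  also have "\<dots> \<le> Suc (Suc (card ((\<lambda>t. inv (c y) \<otimes> t) ` T y)))"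
    using cy card_insert_Suc[of "insert (inv (c y) \<otimes> \<sigma>) ((\<lambda>t. inv (c y) \<otimes> t) ` T y)" \<one>]
      card_insert_Suc[of "(\<lambda>t. inv (c y) \<otimes> t) ` T y" "inv (c y) \<otimes> \<sigma>"] by simp
  also have "\<dots> \<le> Suc (Suc (card (T y)))" using card_image_le[OF cy(2)] by simp
  finally show ?thesis using cy D1 by simp
next
  case False
  have sub: "{z \<in> carrier G. bad \<sigma> y z} \<subseteq> insert \<one> {z \<in> carrier G. (\<exists>s. (y,s) \<in> PP \<and> s \<notin> Y \<and> z \<otimes> b y s = cc y s)
     \<or> (\<exists>v. (v,y) \<in> PP \<and> v \<notin> Y \<and> b v y = z \<otimes> cc v y)}"
    using False unfolding bad_def by auto
  have "card {z \<in> carrier G. bad \<sigma> y z} \<le> card (insert \<one> {z \<in> carrier G. (\<exists>s. (y,s) \<in> PP \<and> s \<notin> Y \<and> z \<otimes> b y s = cc y s)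
     \<or> (\<exists>v. (v,y) \<in> PP \<and> v \<notin> Y \<and> b v y = z \<otimes> cc v y)})"
    by (rule card_mono) (use sub finsub in auto)
  also have "\<dots> \<le> Suc 1" using pairpart_card[OF assms] finsub
    using card_insert_Suc[OF finsub, of \<one>] by (meson Suc_le_mono le_trans)
  finally show ?thesis using D1 by simp
qed

end

context oddgrp begin
lemma QinvQ: "Q \<in> carrier G \<Longrightarrow> u \<in> carrier G \<Longrightarrow> Q \<otimes> inv (Q \<otimes> inv u) = u"
  by (simp add: inv_mult m_assoc[symmetric])

lemma Qinv_one: "Q \<in> carrier G \<Longrightarrow> u \<in> carrier G \<Longrightarrow> Q \<otimes> inv u = \<one> \<Longrightarrow> Q = u"
  by (metis inv_equality inv_inv r_inv m_closed inv_closed l_cancel)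

lemma cancel_l: "x \<in> carrier G \<Longrightarrow> y \<in> carrier G \<Longrightarrow> inv x \<otimes> (x \<otimes> y) = y"
  by (simp add: m_assoc[symmetric])

lemma cancel_r: "x \<in> carrier G \<Longrightarrow> y \<in> carrier G \<Longrightarrow> x \<otimes> (inv x \<otimes> y) = y"
  by (simp add: m_assoc[symmetric])

lemma sq_step:
  assumes "u \<in> carrier G" "Q \<in> carrier G" "bb \<in> carrier G" "c \<in> carrier G"
    and "u \<otimes> bb = (Q \<otimes> inv u) \<otimes> c"
  shows "u \<otimes> u = Q \<otimes> c \<otimes> inv bb"
proof -
  have 1: "(u \<otimes> bb) \<otimes> u = (u \<otimes> u) \<otimes> bb" using assms(1,3)
    by (simp add: m_assoc m_comm[of bb u])
  have 2: "((Q \<otimes> inv u) \<otimes> c) \<otimes> u = Q \<otimes> c" using assms(1-4)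
    by (simp add: m_assoc m_comm[of c u] cancel_l)
  have "(u \<otimes> u) \<otimes> bb = Q \<otimes> c" using 1 2 assms(5) by simp
  hence "(u \<otimes> u) \<otimes> bb \<otimes> inv bb = Q \<otimes> c \<otimes> inv bb" by simp
  thus ?thesis using assms(1,3) by (simp add: m_assoc)
qed

lemma mul_eq_solve:
  assumes "z \<in> carrier G" "bb \<in> carrier G" "c \<in> carrier G" "g \<otimes> bb = z \<otimes> c" "g \<in> carrier G"
  shows "z = g \<otimes> bb \<otimes> inv c"
  using assms by (simp add: m_assoc)
end

context choice_ctx begin

definition goal :: "('v \<Rightarrow> 'a) \<Rightarrow> bool" where
  "goal x \<longleftrightarrow> (\<forall>y\<in>Y. x y \<in> carrier G \<and> x y \<noteq> \<one>) \<and> B \<otimes> finprod G x Y \<notin> bs \<and>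
   (\<forall>y\<in>crit. c y \<otimes> x y \<noteq> B \<otimes> finprod G x Y \<and> c y \<otimes> x y \<notin> T y) \<and>
   (\<forall>(v,s)\<in>PP. (if v \<in> Y then x v else \<one>) \<otimes> b v s \<noteq> (if s \<in> Y then x s else \<one>) \<otimes> cc v s)"

lemma good_imp:
  assumes xY: "\<And>y. y \<in> Y \<Longrightarrow> x y \<in> carrier G \<and> \<not> bad \<sigma> y (x y)"
    and xbin: "\<And>v s. (v,s) \<in> PP \<Longrightarrow> v \<in> Y \<Longrightarrow> s \<in> Y \<Longrightarrow> x v \<otimes> b v s \<noteq> x s \<otimes> cc v s"
    and sb: "\<sigma> \<notin> bs" and se: "\<sigma> = B \<otimes> finprod G x Y"
  shows "goal x"
proof -
  have h1: "\<forall>y\<in>Y. x y \<in> carrier G \<and> x y \<noteq> \<one>" using xY unfolding bad_def by blast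
  have h2: "B \<otimes> finprod G x Y \<notin> bs" using sb se by simp
  have h3: "\<forall>y\<in>crit. c y \<otimes> x y \<noteq> B \<otimes> finprod G x Y \<and> c y \<otimes> x y \<notin> T y"
  proof
    fix y assume y: "y \<in> crit"
    hence "y \<in> Y" using critY by blast
    thus "c y \<otimes> x y \<noteq> B \<otimes> finprod G x Y \<and> c y \<otimes> x y \<notin> T y"
      using xY[of y] y se unfolding bad_def by blast
  qed
  have h4: "\<forall>(v,s)\<in>PP. (if v \<in> Y then x v else \<one>) \<otimes> b v s \<noteq> (if s \<in> Y then x s else \<one>) \<otimes> cc v s"
  proof (intro ballI)
    fix p assume p: "p \<in> PP"
    obtain v s where vs: "p = (v,s)" by (cases p)
    have ax: "v \<noteq> s \<and> (v \<in> Y \<or> s \<in> Y) \<and> b v s \<in> carrier G \<and> cc v s \<in> carrier G"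
      using PPax p vs by blast
    have "(if v \<in> Y then x v else \<one>) \<otimes> b v s \<noteq> (if s \<in> Y then x s else \<one>) \<otimes> cc v s"
    proof (cases "v \<in> Y")
      case vY: True
      show ?thesis
      proof (cases "s \<in> Y")
        case True thus ?thesis using vY xbin p vs by simp
      next
        case False
        have "\<not> bad \<sigma> v (x v)" using xY vY by blast
        hence "x v \<otimes> b v s \<noteq> cc v s" using p vs False unfolding bad_def by blast
        thus ?thesis using vY False ax by simp
      qed
    next
      case vN: False
      hence sY: "s \<in> Y" using ax by blast
      have "\<not> bad \<sigma> s (x s)" using xY sY by blast
      hence "b v s \<noteq> x s \<otimes> cc v s" using p vs vN unfolding bad_def by blast
      thus ?thesis using vN sY ax by simp
    qed
    thus "case p of (v,s) \<Rightarrow> (if v \<in> Y then x v else \<one>) \<otimes> b v s \<noteq> (if s \<in> Y then x s else \<one>) \<otimes> cc v s"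
      using vs by simp
  qed
  show ?thesis unfolding goal_def using h1 h2 h3 h4 by blast
qed

lemma pick: "finite S \<Longrightarrow> card S < card (carrier G) \<Longrightarrow> \<exists>z. z \<in> carrier G \<and> z \<notin> S"
  using avoid by blast

lemma bad_choice: "y \<in> Y \<Longrightarrow> \<exists>z. z \<in> carrier G \<and> \<not> bad \<sigma> y z"
proof -
  assume y: "y \<in> Y"
  obtain z where "z \<in> carrier G" "z \<notin> {z \<in> carrier G. bad \<sigma> y z}"
    using pick[OF finsub, of "bad \<sigma> y"] bad_card[OF y, of \<sigma>] nD by force
  thus ?thesis by blast
qed

lemma prod_two:
  assumes "a1 \<in> Y" "a2 \<in> Y" "a1 \<noteq> a2" "\<And>y. y \<in> Y \<Longrightarrow> x y \<in> carrier G"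
  shows "finprod G x Y = x a1 \<otimes> (x a2 \<otimes> finprod G x (Y - {a1,a2}))"
proof -
  have Y: "Y = insert a1 (insert a2 (Y - {a1,a2}))" using assms by blast
  have f: "finite (Y - {a1,a2})" using Yfin by simp
  have "finprod G x Y = finprod G x (insert a1 (insert a2 (Y - {a1,a2})))" using Y by simp
  also have "\<dots> = x a1 \<otimes> finprod G x (insert a2 (Y - {a1,a2}))"
    using assms f by (intro finprod_insert) auto
  also have "finprod G x (insert a2 (Y - {a1,a2})) = x a2 \<otimes> finprod G x (Y - {a1,a2})"
    using assms f by (intro finprod_insert) auto
  finally show ?thesis .
qed

lemma prod_upd:
  assumes "a1 \<in> Y" "a2 \<in> Y" "a1 \<noteq> a2" "\<And>y. y \<in> Y \<Longrightarrow> x0 y \<in> carrier G"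
    and "u \<in> carrier G" "w \<in> carrier G"
  shows "finprod G (x0(a1 := u, a2 := w)) Y = u \<otimes> (w \<otimes> finprod G x0 (Y - {a1,a2}))"
proof -
  have "finprod G (x0(a1 := u, a2 := w)) Y = (x0(a1 := u, a2 := w)) a1 \<otimes> ((x0(a1 := u, a2 := w)) a2 \<otimes> finprod G (x0(a1 := u, a2 := w)) (Y - {a1,a2}))"
    using assms by (intro prod_two) auto
  also have "finprod G (x0(a1 := u, a2 := w)) (Y - {a1,a2}) = finprod G x0 (Y - {a1,a2})"
    using assms by (intro finprod_cong') auto
  also have "(x0(a1 := u, a2 := w)) a1 = u" using assms by simp
  also have "(x0(a1 := u, a2 := w)) a2 = w" by simp
  finally show ?thesis .
qed

end

lemma card_two: "card {a, b} \<le> 2"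
  by (cases "a = b") auto

context choice_ctx begin

lemma inbin_bad:
  assumes "(v,s) \<in> PP" "v \<in> Y" "s \<in> Y" "y \<in> {v,s}"
  shows "bad \<sigma> y z \<longleftrightarrow> z = \<one>"
proof -
  have yc: "y \<notin> crit" using PPax[OF assms(1)] assms(4) by blast
  have yY: "y \<in> Y" using assms by blast
  have n1: "\<not> (\<exists>s'. (y,s') \<in> PP \<and> s' \<notin> Y)"
  proof
    assume "\<exists>s'. (y,s') \<in> PP \<and> s' \<notin> Y"
    then obtain s' where s': "(y,s') \<in> PP" "s' \<notin> Y" by blast
    have "v = y \<and> s = s'" using uniq[OF assms(1) s'(1) yY assms(4)] by simp
    thus False using s' assms by simp
  qed
  have n2: "\<not> (\<exists>v'. (v',y) \<in> PP \<and> v' \<notin> Y)"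
  proof
    assume "\<exists>v'. (v',y) \<in> PP \<and> v' \<notin> Y"
    then obtain v' where v': "(v',y) \<in> PP" "v' \<notin> Y" by blast
    have "v = v' \<and> s = y" using uniq[OF assms(1) v'(1) yY assms(4)] by simp
    thus False using v' assms by simp
  qed
  show ?thesis using yc n1 n2 unfolding bad_def by blast
qed

lemma caseA:
  assumes A: "(v0,s0) \<in> PP" "v0 \<in> Y" "s0 \<in> Y"
  shows "\<exists>x. goal x"
proof -
  obtain \<sigma> where \<sigma>: "\<sigma> \<in> carrier G" "\<sigma> \<notin> bs" using pick[OF bsfin] bscard nD by force
  obtain g0 where g0: "g0 \<in> carrier G" "g0 \<notin> {\<one>}" using pick[of "{\<one>}"] nD by force
  define isv where "isv = (\<lambda>y. \<exists>s. (y,s) \<in> PP \<and> y \<in> Y \<and> s \<in> Y)"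
  define iss where "iss = (\<lambda>y. \<exists>v. (v,y) \<in> PP \<and> v \<in> Y \<and> y \<in> Y)"
  define pv where "pv = (\<lambda>y. SOME v. (v,y) \<in> PP \<and> v \<in> Y \<and> y \<in> Y)"
  define x0 where "x0 = (\<lambda>y. if isv y then g0 else if iss y then
      (SOME z. z \<in> carrier G \<and> z \<noteq> \<one> \<and> g0 \<otimes> b (pv y) y \<noteq> z \<otimes> cc (pv y) y)
      else (SOME z. z \<in> carrier G \<and> \<not> bad \<sigma> y z))"
  have not_both: "\<And>y. isv y \<Longrightarrow> \<not> iss y"
  proof
    fix y assume "isv y" "iss y"
    then obtain s v where 1: "(y,s) \<in> PP" "y \<in> Y" "s \<in> Y" and 2: "(v,y) \<in> PP"
      unfolding isv_def iss_def by blast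
    have "y = v \<and> s = y" using uniq[OF 1(1) 2 1(2)] by simp
    thus False using PPax[OF 1(1)] by simp
  qed
  have pv: "\<And>y v. (v,y) \<in> PP \<Longrightarrow> v \<in> Y \<Longrightarrow> y \<in> Y \<Longrightarrow> pv y = v"
  proof -
    fix y v assume h: "(v,y) \<in> PP" "v \<in> Y" "y \<in> Y"
    have "(pv y, y) \<in> PP \<and> pv y \<in> Y \<and> y \<in> Y" unfolding pv_def
      by (rule someI[of "\<lambda>v'. (v',y) \<in> PP \<and> v' \<in> Y \<and> y \<in> Y"]) (use h in blast)
    thus "pv y = v" using uniq[OF h(1), of "pv y" y y] h by simp
  qed
  have x0c: "\<And>y. y \<in> Y \<Longrightarrow> x0 y \<in> carrier G \<and> x0 y \<noteq> \<one> \<and> (\<not> isv y \<and> \<not> iss y \<longrightarrow> \<not> bad \<sigma> y (x0 y))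
      \<and> (iss y \<longrightarrow> g0 \<otimes> b (pv y) y \<noteq> x0 y \<otimes> cc (pv y) y)"
  proof -
    fix y assume y: "y \<in> Y"
    show "x0 y \<in> carrier G \<and> x0 y \<noteq> \<one> \<and> (\<not> isv y \<and> \<not> iss y \<longrightarrow> \<not> bad \<sigma> y (x0 y))
      \<and> (iss y \<longrightarrow> g0 \<otimes> b (pv y) y \<noteq> x0 y \<otimes> cc (pv y) y)"
    proof (cases "isv y")
      case True thus ?thesis using g0 not_both unfolding x0_def by simp
    next
      case nv: False
      show ?thesis
      proof (cases "iss y")
        case True
        then obtain v where v: "(v,y) \<in> PP" "v \<in> Y" unfolding iss_def by blast
        have pvy: "pv y = v" using pv[OF v y] .
        have bc: "b v y \<in> carrier G" "cc v y \<in> carrier G" using PPax[OF v(1)] by auto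
        obtain z where z: "z \<in> carrier G" "z \<notin> {\<one>, g0 \<otimes> b v y \<otimes> inv (cc v y)}"
          using pick[of "{\<one>, g0 \<otimes> b v y \<otimes> inv (cc v y)}"] nD card_two[of \<one> "g0 \<otimes> b v y \<otimes> inv (cc v y)"]
          by force
        have "z \<in> carrier G \<and> z \<noteq> \<one> \<and> g0 \<otimes> b (pv y) y \<noteq> z \<otimes> cc (pv y) y"
        proof -
          have "g0 \<otimes> b v y \<noteq> z \<otimes> cc v y"
          proof
            assume "g0 \<otimes> b v y = z \<otimes> cc v y"
            hence "z = g0 \<otimes> b v y \<otimes> inv (cc v y)" using mul_eq_solve z(1) bc g0(1) by blast
            thus False using z by simp
          qed
          thus ?thesis using z pvy by simp
        qed
        hence "x0 y \<in> carrier G \<and> x0 y \<noteq> \<one> \<and> g0 \<otimes> b (pv y) y \<noteq> x0 y \<otimes> cc (pv y) y"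
          unfolding x0_def using nv True by (simp only: if_False if_True) (rule someI)
        thus ?thesis using True by simp
      next
        case False
        have "x0 y \<in> carrier G \<and> \<not> bad \<sigma> y (x0 y)"
          unfolding x0_def using nv False bad_choice[OF y, of \<sigma>] by (simp only: if_False) (rule someI_ex)
        thus ?thesis using False unfolding bad_def by blast
      qed
    qed
  qed
  define P where "P = finprod G x0 (Y - {v0,s0})"
  define Q where "Q = inv B \<otimes> \<sigma> \<otimes> inv P"
  have Pc: "P \<in> carrier G" unfolding P_def using x0c by (intro finprod_closed) blast
  have Qc: "Q \<in> carrier G" unfolding Q_def using Pc \<sigma> Bc by simp
  have bcc: "b v0 s0 \<in> carrier G" "cc v0 s0 \<in> carrier G" "v0 \<noteq> s0" using PPax[OF A(1)] by auto
  define K where "K = Q \<otimes> cc v0 s0 \<otimes> inv (b v0 s0)"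
  have fin3: "finite ({\<one>, Q} \<union> {u \<in> carrier G. u \<otimes> u = K})" using finsub by simp
  have "card ({\<one>, Q} \<union> {u \<in> carrier G. u \<otimes> u = K}) \<le> card {\<one>, Q} + card {u \<in> carrier G. u \<otimes> u = K}"
    by (rule card_Un_le)
  also have "\<dots> \<le> 2 + 1" using sq_card[of K] card_two[of \<one> Q] by linarith
  finally have c3: "card ({\<one>, Q} \<union> {u \<in> carrier G. u \<otimes> u = K}) < card (carrier G)" using nD D1 by linarith
  obtain u where u: "u \<in> carrier G" "u \<notin> {\<one>, Q} \<union> {u \<in> carrier G. u \<otimes> u = K}"
    using pick[OF fin3 c3] by blast
  define x where "x = x0(v0 := u, s0 := Q \<otimes> inv u)"
  have xv0: "x v0 = u" and xs0: "x s0 = Q \<otimes> inv u" using bcc unfolding x_def by simp_all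
  have xo: "\<And>y. y \<noteq> v0 \<Longrightarrow> y \<noteq> s0 \<Longrightarrow> x y = x0 y" unfolding x_def by simp
  have prod: "finprod G x Y = u \<otimes> (Q \<otimes> inv u \<otimes> P)"
    unfolding x_def P_def using prod_upd[OF A(2,3) bcc(3), of x0 u "Q \<otimes> inv u"] x0c u Qc by simp
  have se: "\<sigma> = B \<otimes> finprod G x Y"
    unfolding prod Q_def using cancel_helper[OF Bc \<sigma>(1) Pc u(1)] by simp
  show ?thesis
  proof (rule exI, rule good_imp[OF _ _ \<sigma>(2) se])
    fix y assume y: "y \<in> Y"
    show "x y \<in> carrier G \<and> \<not> bad \<sigma> y (x y)"
    proof (cases "y = v0")
      case True
      thus ?thesis using xv0 u inbin_bad[OF A, of y \<sigma> u] by simp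
    next
      case nv0: False
      show ?thesis
      proof (cases "y = s0")
        case True
        have "Q \<otimes> inv u \<noteq> \<one>" using Qinv_one[OF Qc u(1)] u by blast
        thus ?thesis using True xs0 u Qc inbin_bad[OF A, of y \<sigma> "Q \<otimes> inv u"] by simp
      next
        case False
        have xy: "x y = x0 y" using xo nv0 False by simp
        show ?thesis
        proof (cases "isv y \<or> iss y")
          case True
          then obtain v s where vs: "(v,s) \<in> PP" "v \<in> Y" "s \<in> Y" "y \<in> {v,s}"
            unfolding isv_def iss_def by blast
          thus ?thesis using inbin_bad[OF vs, of \<sigma> "x0 y"] x0c[OF y] xy by simp
        next
          case False thus ?thesis using x0c[OF y] xy by simp
        qed
      qed
    qed
  next
    fix v s assume vs: "(v,s) \<in> PP" "v \<in> Y" "s \<in> Y"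
    show "x v \<otimes> b v s \<noteq> x s \<otimes> cc v s"
    proof (cases "v = v0 \<and> s = s0")
      case True
      show ?thesis
      proof
        assume "x v \<otimes> b v s = x s \<otimes> cc v s"
        hence "u \<otimes> b v0 s0 = (Q \<otimes> inv u) \<otimes> cc v0 s0" using True xv0 xs0 by simp
        hence "u \<otimes> u = K" unfolding K_def by (rule sq_step[OF u(1) Qc bcc(1) bcc(2)])
        thus False using u by simp
      qed
    next
      case False
      have nv: "v \<noteq> v0" "v \<noteq> s0" "s \<noteq> v0" "s \<noteq> s0"
      proof -
        have u1: "y \<in> {v,s} \<Longrightarrow> y \<in> {v0,s0} \<Longrightarrow> y \<in> Y \<Longrightarrow> False" for y
          using uniq[OF vs(1) A(1), of y] False by blast
        show "v \<noteq> v0" using u1[of v] vs by blast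
        show "v \<noteq> s0" using u1[of v] vs by blast
        show "s \<noteq> v0" using u1[of s] vs by blast
        show "s \<noteq> s0" using u1[of s] vs by blast
      qed
      have iv: "isv v" unfolding isv_def using vs by blast
      have iss_s: "iss s" unfolding iss_def using vs by blast
      have "\<not> isv s" using not_both iss_s by blast
      have "x v = g0" using xo nv iv unfolding x0_def by simp
      moreover have "g0 \<otimes> b (pv s) s \<noteq> x0 s \<otimes> cc (pv s) s" using x0c[OF vs(3)] iss_s by blast
      moreover have "pv s = v" using pv vs by blast
      moreover have "x s = x0 s" using xo nv by simp
      ultimately show ?thesis by simp
    qed
  qed
qed

end

context choice_ctx begin

lemma caseB1:
  assumes nb: "\<not> (\<exists>v s. (v,s) \<in> PP \<and> v \<in> Y \<and> s \<in> Y)"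
    and a: "a1 \<in> Y" "a2 \<in> Y" "a1 \<noteq> a2"
  shows "\<exists>x. goal x"
proof -
  obtain \<sigma> where \<sigma>: "\<sigma> \<in> carrier G" "\<sigma> \<notin> bs" using pick[OF bsfin] bscard nD by force
  define x0 where "x0 = (\<lambda>y. SOME z. z \<in> carrier G \<and> \<not> bad \<sigma> y z)"
  have x0c: "\<And>y. y \<in> Y \<Longrightarrow> x0 y \<in> carrier G \<and> \<not> bad \<sigma> y (x0 y)"
    unfolding x0_def using bad_choice by (rule someI_ex)
  define P where "P = finprod G x0 (Y - {a1,a2})"
  define Q where "Q = inv B \<otimes> \<sigma> \<otimes> inv P"
  have Pc: "P \<in> carrier G" unfolding P_def using x0c by (intro finprod_closed) blast
  have Qc: "Q \<in> carrier G" unfolding Q_def using Pc \<sigma> Bc by simp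
  define S where "S = {z \<in> carrier G. bad \<sigma> a1 z} \<union> (\<lambda>z. Q \<otimes> inv z) ` {z \<in> carrier G. bad \<sigma> a2 z}"
  have finS: "finite S" unfolding S_def using finsub by simp
  have "card S \<le> card {z \<in> carrier G. bad \<sigma> a1 z} + card ((\<lambda>z. Q \<otimes> inv z) ` {z \<in> carrier G. bad \<sigma> a2 z})"
    unfolding S_def by (rule card_Un_le)
  also have "\<dots> \<le> (D+1) + (D+1)"
    using bad_card[OF a(1), of \<sigma>] bad_card[OF a(2), of \<sigma>] card_image_le[OF finsub, of "\<lambda>z. Q \<otimes> inv z" "bad \<sigma> a2"]
    by linarith
  finally have cS: "card S < card (carrier G)" using nD by linarith
  obtain u where u: "u \<in> carrier G" "u \<notin> S" using pick[OF finS cS] by blast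
  define x where "x = x0(a1 := u, a2 := Q \<otimes> inv u)"
  have xa1: "x a1 = u" and xa2: "x a2 = Q \<otimes> inv u" using a unfolding x_def by simp_all
  have xo: "\<And>y. y \<noteq> a1 \<Longrightarrow> y \<noteq> a2 \<Longrightarrow> x y = x0 y" unfolding x_def by simp
  have prod: "finprod G x Y = u \<otimes> (Q \<otimes> inv u \<otimes> P)"
    unfolding x_def P_def using prod_upd[OF a, of x0 u "Q \<otimes> inv u"] x0c u Qc by simp
  have se: "\<sigma> = B \<otimes> finprod G x Y"
    unfolding prod Q_def using cancel_helper[OF Bc \<sigma>(1) Pc u(1)] by simp
  show ?thesis
  proof (rule exI, rule good_imp[OF _ _ \<sigma>(2) se])
    fix y assume y: "y \<in> Y"
    show "x y \<in> carrier G \<and> \<not> bad \<sigma> y (x y)"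
    proof (cases "y = a1")
      case True thus ?thesis using xa1 u unfolding S_def by simp
    next
      case n1: False
      show ?thesis
      proof (cases "y = a2")
        case True
        have c2: "Q \<otimes> inv u \<in> carrier G" using Qc u by simp
        have "\<not> bad \<sigma> a2 (Q \<otimes> inv u)"
        proof
          assume "bad \<sigma> a2 (Q \<otimes> inv u)"
          hence "Q \<otimes> inv (Q \<otimes> inv u) \<in> S" unfolding S_def using c2 by blast
          thus False using QinvQ[OF Qc u(1)] u by simp
        qed
        thus ?thesis using True xa2 c2 by simp
      next
        case False thus ?thesis using xo n1 x0c[OF y] by simp
      qed
    qed
  next
    fix v s assume "(v,s) \<in> PP" "v \<in> Y" "s \<in> Y"
    thus "x v \<otimes> b v s \<noteq> x s \<otimes> cc v s" using nb by blast
  qed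
qed

lemma caseB2:
  assumes nb: "\<not> (\<exists>v s. (v,s) \<in> PP \<and> v \<in> Y \<and> s \<in> Y)"
    and Y1: "Y = {y}"
  shows "\<exists>x. goal x"
proof -
  define S1 where "S1 = (\<lambda>z. B \<otimes> z) ` {z \<in> carrier G. bad0 y z}"
  have yY: "y \<in> Y" using Y1 by simp
  have "card S1 \<le> card {z \<in> carrier G. bad0 y z}" unfolding S1_def by (rule card_image_le[OF finsub])
  also have "\<dots> \<le> card {z \<in> carrier G. bad \<one> y z}"
    by (rule card_mono[OF finsub]) (auto simp: bad_def bad0_def)
  also have "\<dots> \<le> D + 1" by (rule bad_card[OF yY])
  finally have cS1: "card S1 \<le> D + 1" .
  have finU: "finite (bs \<union> S1)" unfolding S1_def using bsfin finsub by simp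
  have "card (bs \<union> S1) \<le> card bs + card S1" by (rule card_Un_le)
  hence cU: "card (bs \<union> S1) < card (carrier G)" using cS1 bscard nD by linarith
  obtain \<sigma> where \<sigma>: "\<sigma> \<in> carrier G" "\<sigma> \<notin> bs \<union> S1" using pick[OF finU cU] by blast
  define z where "z = inv B \<otimes> \<sigma>"
  have zc: "z \<in> carrier G" unfolding z_def using Bc \<sigma> by simp
  have Bz: "B \<otimes> z = \<sigma>" unfolding z_def using Bc \<sigma> by (simp add: cancel_r)
  define x where "x = (\<lambda>_::'v. z)"
  have prod: "finprod G x Y = z" unfolding Y1 x_def using zc by simp
  have se: "\<sigma> = B \<otimes> finprod G x Y" using prod Bz by simp
  show ?thesis
  proof (rule exI, rule good_imp[OF _ _ _ se])
    show "\<sigma> \<notin> bs" using \<sigma> by blast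
  next
    fix y' assume "y' \<in> Y"
    hence y': "y' = y" using Y1 by simp
    have "\<not> bad \<sigma> y z"
    proof
      assume bz: "bad \<sigma> y z"
      show False
      proof (cases "y \<in> crit \<and> c y \<otimes> z = \<sigma>")
        case True
        have cy: "c y \<in> carrier G" using cT True by blast
        have "(c y \<otimes> inv B) \<otimes> \<sigma> = \<one> \<otimes> \<sigma>"
          using True cy Bc \<sigma>(1) unfolding z_def by (simp add: m_assoc)
        hence "c y \<otimes> inv B = \<one>" using cy Bc \<sigma>(1) by (metis inv_closed m_closed one_closed r_cancel)
        hence "c y = B" using Qinv_one cy Bc by blast
        thus False using single[OF Y1] True by blast
      next
        case False
        hence "bad0 y z" using bz unfolding bad_def bad0_def by blast
        hence "\<sigma> \<in> S1" unfolding S1_def using zc Bz by blast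
        thus False using \<sigma> by blast
      qed
    qed
    thus "x y' \<in> carrier G \<and> \<not> bad \<sigma> y' (x y')" using y' zc unfolding x_def by simp
  next
    fix v s assume "(v,s) \<in> PP" "v \<in> Y" "s \<in> Y"
    thus "x v \<otimes> b v s \<noteq> x s \<otimes> cc v s" using nb by blast
  qed
qed

lemma choice: "\<exists>x. goal x"
proof (cases "\<exists>v s. (v,s) \<in> PP \<and> v \<in> Y \<and> s \<in> Y")
  case True
  then obtain v s where "(v,s) \<in> PP" "v \<in> Y" "s \<in> Y" by blast
  thus ?thesis by (rule caseA)
next
  case nb: False
  show ?thesis
  proof (cases "\<exists>a1 a2. a1 \<in> Y \<and> a2 \<in> Y \<and> a1 \<noteq> a2")
    case True
    then obtain a1 a2 where "a1 \<in> Y" "a2 \<in> Y" "a1 \<noteq> a2" by blast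
    thus ?thesis using caseB1[OF nb] by blast
  next
    case False
    obtain y where "y \<in> Y" using Yne by blast
    hence "Y = {y}" using False by blast
    thus ?thesis using caseB2[OF nb] by blast
  qed
qed

end

locale greedy = oddgrp G for G (structure) +
  fixes V :: "'v set" and E :: "'v set set" and pos :: "'v \<Rightarrow> nat" and D :: nat
  assumes sg: "simple_graph V E" and noiso: "no_isolated_edges E"
    and injpos: "inj_on pos V" and nD: "2*D+3 \<le> card (carrier G)" and D1: "1 \<le> D"
    and bckD: "\<And>v. v \<in> V \<Longrightarrow> card {u. {u,v} \<in> E \<and> pos u < pos v} \<le> D"
begin

definition nbrs where "nbrs v = {u. {u,v} \<in> E}"
definition bck where "bck v = {u. {u,v} \<in> E \<and> pos u < pos v}"
definition fwd where "fwd v = {u. {u,v} \<in> E \<and> pos v < pos u}"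
definition S where "S f v = finprod G (\<lambda>u. f {u,v}) (nbrs v)"
definition badp where "badp v s \<longleftrightarrow> fwd v = {s} \<and> fwd s = {} \<and> (\<forall>u\<in>bck s. pos u \<le> pos v)"
definition Rs where "Rs v s = bck v \<union> (bck s - {v})"
definition crits where "crits w = {s \<in> fwd w. fwd s = {} \<and> (\<forall>u\<in>bck s. pos u \<le> pos w)}"
definition fin where "fin i u \<longleftrightarrow> pos u < i \<or> (\<forall>x\<in>nbrs u. pos x < i)"
definition Bp where "Bp f v = finprod G (\<lambda>u. f {u,v}) (bck v)"
definition Cp where "Cp f v s = finprod G (\<lambda>u. f {u,s}) (bck s - {v})"
definition Inv where "Inv i f \<longleftrightarrow> (\<forall>e. f e \<in> carrier G) \<and>
   (\<forall>u v. {u,v} \<in> E \<longrightarrow> pos u < i \<longrightarrow> f {u,v} \<noteq> \<one>) \<and>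
   (\<forall>u v. {u,v} \<in> E \<longrightarrow> fin i u \<longrightarrow> fin i v \<longrightarrow> S f u \<noteq> S f v) \<and>
   (\<forall>v s. badp v s \<longrightarrow> (\<forall>r\<in>Rs v s. pos r < i) \<longrightarrow> Bp f v \<noteq> Cp f v s)"

lemma edge_sym: "{u,v} \<in> E \<Longrightarrow> {v,u} \<in> E"
  by (simp add: insert_commute)

lemma edge_ne: assumes "{u,v} \<in> E" shows "u \<noteq> v" "u \<in> V" "v \<in> V"
proof -
  obtain a b where ab: "{u,v} = {a,b}" "a \<noteq> b" "a \<in> V" "b \<in> V"
    using sg assms unfolding simple_graph_def by blast
  show "u \<noteq> v" using ab by (metis doubleton_eq_iff)
  show "u \<in> V" using ab by (metis doubleton_eq_iff)
  show "v \<in> V" using ab by (metis doubleton_eq_iff)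
qed

lemma Vfin: "finite V" using sg unfolding simple_graph_def by blast

lemma pos_eq: "u \<in> V \<Longrightarrow> v \<in> V \<Longrightarrow> pos u = pos v \<Longrightarrow> u = v"
  using injpos unfolding inj_on_def by blast

lemma nbrs_sub: "nbrs v \<subseteq> V" unfolding nbrs_def using edge_ne by blast
lemma nbrs_fin: "finite (nbrs v)" using nbrs_sub Vfin finite_subset by blast
lemma bck_sub: "bck v \<subseteq> nbrs v" unfolding bck_def nbrs_def by blast
lemma fwd_sub: "fwd v \<subseteq> nbrs v" unfolding fwd_def nbrs_def by blast
lemma bck_fin: "finite (bck v)" using bck_sub nbrs_fin finite_subset by blast
lemma fwd_fin: "finite (fwd v)" using fwd_sub nbrs_fin finite_subset by blast

lemma nbrs_split: "v \<in> V \<Longrightarrow> nbrs v = bck v \<union> fwd v"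
proof
  assume v: "v \<in> V"
  show "nbrs v \<subseteq> bck v \<union> fwd v"
  proof
    fix u assume u: "u \<in> nbrs v"
    hence e: "{u,v} \<in> E" unfolding nbrs_def by simp
    have "pos u \<noteq> pos v" using pos_eq[OF edge_ne(2,3)[OF e]] edge_ne(1)[OF e] by blast
    thus "u \<in> bck v \<union> fwd v" using e unfolding bck_def fwd_def by auto
  qed
qed (use bck_sub fwd_sub in blast)

lemma bck_fwd_disj: "bck v \<inter> fwd v = {}" unfolding bck_def fwd_def by auto

lemma in_bck_fwd: "u \<in> bck v \<longleftrightarrow> v \<in> fwd u"
  unfolding bck_def fwd_def by (auto simp: insert_commute)

lemma nbrs_sym: "u \<in> nbrs v \<longleftrightarrow> v \<in> nbrs u"
  unfolding nbrs_def by (auto simp: insert_commute)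

lemma bck_D: "v \<in> V \<Longrightarrow> card (bck v) \<le> D" using bckD unfolding bck_def by simp

end

context greedy begin

definition upd :: "'v \<Rightarrow> ('v \<Rightarrow> 'a) \<Rightarrow> ('v set \<Rightarrow> 'a) \<Rightarrow> 'v set \<Rightarrow> 'a" where
  "upd w x f e = (if \<exists>y\<in>fwd w. e = {w,y} then x (SOME y. y \<in> fwd w \<and> e = {w,y}) else f e)"

lemma upd_fwd: assumes "y \<in> fwd w" shows "upd w x f {w,y} = x y" "upd w x f {y,w} = x y"
proof -
  have "(SOME y'. y' \<in> fwd w \<and> {w,y} = {w,y'}) = y"
    by (rule some_equality) (use assms in \<open>auto simp: doubleton_eq_iff\<close>)
  thus "upd w x f {w,y} = x y" using assms unfolding upd_def by auto
  thus "upd w x f {y,w} = x y" by (simp add: insert_commute)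
qed

lemma upd_same: assumes "u \<noteq> w" "z = w \<longrightarrow> u \<notin> fwd w" shows "upd w x f {u,z} = f {u,z}"
proof -
  have "\<not> (\<exists>y\<in>fwd w. {u,z} = {w,y})"
  proof
    assume "\<exists>y\<in>fwd w. {u,z} = {w,y}"
    then obtain y where y: "y \<in> fwd w" "{u,z} = {w,y}" by blast
    hence "(u = w \<and> z = y) \<or> (u = y \<and> z = w)" by (simp add: doubleton_eq_iff)
    thus False using assms y by blast
  qed
  thus ?thesis unfolding upd_def by simp
qed

lemma other_end:
  assumes "e \<in> E" "z \<in> e" shows "\<exists>t. e = {z,t} \<and> t \<in> nbrs z"
proof -
  obtain a b where ab: "e = {a,b}" using sg assms unfolding simple_graph_def by blast
  show ?thesis
  proof (cases "z = a")
    case True thus ?thesis using ab assms unfolding nbrs_def by (auto simp: insert_commute)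
  next
    case False hence "z = b" using ab assms by blast
    thus ?thesis using ab assms unfolding nbrs_def by (auto simp: insert_commute)
  qed
qed

lemma Rs_ne: assumes "badp v s" shows "Rs v s \<noteq> {}"
proof
  assume R: "Rs v s = {}"
  have fv: "fwd v = {s}" and fs: "fwd s = {}" using assms unfolding badp_def by auto
  have e: "{s,v} \<in> E" using fv unfolding fwd_def by blast
  have vV: "v \<in> V" "s \<in> V" using edge_ne[OF e] by auto
  have nv: "nbrs v = {s}" using nbrs_split[OF vV(1)] R fv unfolding Rs_def by auto
  have ns: "nbrs s \<subseteq> {v}" using nbrs_split[OF vV(2)] R fs unfolding Rs_def by auto
  obtain e' where e': "e' \<in> E" "e' \<noteq> {s,v}" "{s,v} \<inter> e' \<noteq> {}"
    using noiso e unfolding no_isolated_edges_def by blast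
  then obtain z where z: "z \<in> {s,v}" "z \<in> e'" by blast
  obtain t where t: "e' = {z,t}" "t \<in> nbrs z" using other_end[OF e'(1) z(2)] by blast
  show False
  proof (cases "z = v")
    case True thus ?thesis using t nv e' by (auto simp: insert_commute)
  next
    case False hence "z = s" using z by blast
    thus ?thesis using t ns e' by auto
  qed
qed

lemma Inv0: "Inv 0 (\<lambda>_. \<one>)"
  unfolding Inv_def
proof (intro conjI allI impI)
  fix u v assume "{u,v} \<in> E" "fin 0 u" "fin 0 v"
  hence "v \<in> nbrs u" "\<forall>x\<in>nbrs u. pos x < 0" unfolding fin_def nbrs_def by (auto simp: insert_commute)
  thus "S (\<lambda>_. \<one>) u \<noteq> S (\<lambda>_. \<one>) v" by blast
next
  fix v s assume "badp v s" "\<forall>r\<in>Rs v s. pos r < 0"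
  thus "Bp (\<lambda>_. \<one>) v \<noteq> Cp (\<lambda>_. \<one>) v s" using Rs_ne by blast
qed auto

lemma Rs_sub: "badp v s \<Longrightarrow> Rs v s \<subseteq> V"
  unfolding Rs_def bck_def using edge_ne by blast

lemma step_skip:
  assumes inv: "Inv i f" and nw: "\<not> (\<exists>w\<in>V. pos w = i)"
  shows "Inv (Suc i) f"
proof -
  have p: "\<And>u. u \<in> V \<Longrightarrow> pos u < Suc i \<longleftrightarrow> pos u < i" using nw by (auto simp: less_Suc_eq)
  have fn: "\<And>u. u \<in> V \<Longrightarrow> fin (Suc i) u \<longleftrightarrow> fin i u"
    unfolding fin_def using p nbrs_sub by blast
  show ?thesis unfolding Inv_def
  proof (intro conjI allI impI)
    fix e show "f e \<in> carrier G" using inv unfolding Inv_def by blast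
  next
    fix u v assume "{u,v} \<in> E" "pos u < Suc i"
    thus "f {u,v} \<noteq> \<one>" using inv p edge_ne unfolding Inv_def by blast
  next
    fix u v assume "{u,v} \<in> E" "fin (Suc i) u" "fin (Suc i) v"
    thus "S f u \<noteq> S f v" using inv fn edge_ne unfolding Inv_def by blast
  next
    fix v s assume "badp v s" "\<forall>r\<in>Rs v s. pos r < Suc i"
    thus "Bp f v \<noteq> Cp f v s" using inv p Rs_sub unfolding Inv_def by blast
  qed
qed

lemma step_sink:
  assumes inv: "Inv i f" and w: "w \<in> V" "pos w = i" and fw: "fwd w = {}"
  shows "Inv (Suc i) f"
proof -
  have nw: "nbrs w = bck w" using nbrs_split[OF w(1)] fw by simp
  have p: "\<And>u. u \<in> V \<Longrightarrow> u \<noteq> w \<Longrightarrow> pos u < Suc i \<longleftrightarrow> pos u < i"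
    using w pos_eq by (auto simp: less_Suc_eq)
  have fn: "\<And>u. u \<in> V \<Longrightarrow> fin (Suc i) u \<Longrightarrow> fin i u"
  proof -
    fix u assume u: "u \<in> V" and fu: "fin (Suc i) u"
    show "fin i u"
    proof (cases "u = w")
      case True thus ?thesis using nw w unfolding fin_def bck_def by auto
    next
      case uw: False
      show ?thesis
      proof (cases "w \<in> nbrs u")
        case True hence "u \<in> bck w" using nw nbrs_sym by blast
        thus ?thesis unfolding fin_def bck_def using w by simp
      next
        case False
        have "\<forall>x\<in>nbrs u. x \<noteq> w" using False by blast
        thus ?thesis using fu p[OF u uw] p nbrs_sub unfolding fin_def by blast
      qed
    qed
  qed
  show ?thesis unfolding Inv_def
  proof (intro conjI allI impI)
    fix e show "f e \<in> carrier G" using inv unfolding Inv_def by blast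
  next
    fix u v assume e: "{u,v} \<in> E" and pu: "pos u < Suc i"
    show "f {u,v} \<noteq> \<one>"
    proof (cases "u = w")
      case True
      hence "v \<in> bck w" using nw e unfolding nbrs_def by (auto simp: insert_commute)
      hence "pos v < i" using w unfolding bck_def by simp
      thus ?thesis using inv edge_sym[OF e] unfolding Inv_def by (metis insert_commute)
    next
      case False thus ?thesis using inv p[OF edge_ne(2)[OF e] False] pu e unfolding Inv_def by blast
    qed
  next
    fix u v assume "{u,v} \<in> E" "fin (Suc i) u" "fin (Suc i) v"
    thus "S f u \<noteq> S f v" using inv fn edge_ne unfolding Inv_def by blast
  next
    fix v s assume bp: "badp v s" and R: "\<forall>r\<in>Rs v s. pos r < Suc i"
    have "w \<notin> Rs v s"
    proof
      assume "w \<in> Rs v s"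
      hence "v \<in> fwd w \<or> s \<in> fwd w" unfolding Rs_def using in_bck_fwd by blast
      thus False using fw by blast
    qed
    hence "\<forall>r\<in>Rs v s. pos r < i" using R p Rs_sub[OF bp] by blast
    thus "Bp f v \<noteq> Cp f v s" using inv bp unfolding Inv_def by blast
  qed
qed

end

context greedy begin

lemma oddgrpG: "oddgrp G" by intro_locales

lemma fwd_not_fin: "y \<in> fwd w \<Longrightarrow> pos w = i \<Longrightarrow> \<not> fin i y"
  unfolding fin_def fwd_def nbrs_def by (auto simp: insert_commute)

lemma step_main:
  assumes inv: "Inv i f" and w: "w \<in> V" "pos w = i" and fw: "fwd w \<noteq> {}"
  shows "\<exists>f'. Inv (Suc i) f'"
proof -
  have fc: "\<And>e. f e \<in> carrier G" using inv unfolding Inv_def by blast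
  have invb: "\<And>u v. {u,v} \<in> E \<Longrightarrow> pos u < i \<Longrightarrow> f {u,v} \<noteq> \<one>"
    using inv unfolding Inv_def by blast
  have invc: "\<And>u v. {u,v} \<in> E \<Longrightarrow> fin i u \<Longrightarrow> fin i v \<Longrightarrow> S f u \<noteq> S f v"
    using inv unfolding Inv_def by blast
  have invd: "\<And>v s. badp v s \<Longrightarrow> \<forall>r\<in>Rs v s. pos r < i \<Longrightarrow> Bp f v \<noteq> Cp f v s"
    using inv unfolding Inv_def by blast
  define Y where "Y = fwd w"
  define crit where "crit = crits w"
  define c where "c = (\<lambda>y. finprod G (\<lambda>u. f {u,y}) (bck y - {w}))"
  define T where "T = (\<lambda>y. (\<lambda>u. S f u) ` (bck y - {w}))"
  define PP where "PP = {(v,s). badp v s \<and> w \<in> Rs v s \<and> (\<forall>r\<in>Rs v s. pos r \<le> pos w)}"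
  define b where "b = (\<lambda>v (s::'v). finprod G (\<lambda>u. f {u,v}) (bck v - {w}))"
  define cc where "cc = (\<lambda>v s. finprod G (\<lambda>u. f {u,s}) (bck s - {v,w}))"
  define B where "B = Bp f w"
  define bs where "bs = (\<lambda>u. S f u) ` bck w"
  have h1: "finite Y" unfolding Y_def by (rule fwd_fin)
  have h2: "Y \<noteq> {}" unfolding Y_def by (rule fw)
  have h5: "B \<in> carrier G" unfolding B_def Bp_def using fc by simp
  have h6: "finite bs" unfolding bs_def using bck_fin by simp
  have h7: "card bs \<le> D" unfolding bs_def using card_image_le[OF bck_fin] bck_D[OF w(1)] le_trans by blast
  have h8: "crit \<subseteq> Y" unfolding crit_def Y_def crits_def by blast
  have h9: "\<forall>y. y \<in> crit \<longrightarrow> c y \<in> carrier G \<and> finite (T y) \<and> card (T y) \<le> D - 1"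
  proof (intro allI impI conjI)
    fix y assume y: "y \<in> crit"
    show "c y \<in> carrier G" unfolding c_def using fc by simp
    show "finite (T y)" unfolding T_def using bck_fin by simp
    have wy: "w \<in> bck y" using y unfolding crit_def crits_def using in_bck_fwd by blast
    have yV: "y \<in> V" using y unfolding crit_def crits_def fwd_def using edge_ne by blast
    have "card (T y) \<le> card (bck y - {w})" unfolding T_def using bck_fin by (simp add: card_image_le)
    also have "\<dots> = card (bck y) - 1" using wy bck_fin by simp
    also have "\<dots> \<le> D - 1" using bck_D[OF yV] by simp
    finally show "card (T y) \<le> D - 1" .
  qed
  have badp_v: "\<And>v s. badp v s \<Longrightarrow> v \<in> bck s \<and> s \<in> fwd v \<and> v \<noteq> s"
    unfolding badp_def using in_bck_fwd fwd_def edge_ne by blast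
  have PPw: "\<And>v s. (v,s) \<in> PP \<Longrightarrow> v \<noteq> w \<and> s \<noteq> w"
  proof -
    fix v s assume p: "(v,s) \<in> PP"
    hence bp: "badp v s" and wR: "w \<in> Rs v s" unfolding PP_def by auto
    have vs: "v \<in> bck s" using badp_v[OF bp] by blast
    show "v \<noteq> w \<and> s \<noteq> w"
    proof
      show "v \<noteq> w" using wR unfolding Rs_def bck_def by auto
      show "s \<noteq> w"
      proof
        assume sw: "s = w"
        have "w \<in> bck v" using wR sw unfolding Rs_def bck_def by auto
        thus False using vs sw unfolding bck_def by auto
      qed
    qed
  qed
  have vY: "\<And>v. v \<in> Y \<longleftrightarrow> w \<in> bck v" unfolding Y_def using in_bck_fwd by blast
  have h10: "\<forall>v s. (v,s) \<in> PP \<longrightarrow> v \<noteq> s \<and> (v \<in> Y \<or> s \<in> Y) \<and> v \<notin> crit \<and> s \<notin> crit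
                 \<and> b v s \<in> carrier G \<and> cc v s \<in> carrier G"
  proof (intro allI impI conjI)
    fix v s assume p: "(v,s) \<in> PP"
    hence bp: "badp v s" and wR: "w \<in> Rs v s" and Rle: "\<forall>r\<in>Rs v s. pos r \<le> pos w"
      unfolding PP_def by auto
    show "v \<noteq> s" using badp_v[OF bp] by blast
    show "v \<in> Y \<or> s \<in> Y" using wR vY unfolding Rs_def by blast
    show "v \<notin> crit" using bp unfolding crit_def crits_def badp_def by auto
    show "s \<notin> crit"
    proof
      assume "s \<in> crit"
      hence le: "pos v \<le> pos w" using badp_v[OF bp] unfolding crit_def crits_def by blast
      have vV: "v \<in> V" "w \<in> V" using badp_v[OF bp] w unfolding bck_def using edge_ne by auto
      show False
      proof (cases "w \<in> bck v")
        case True thus False using le unfolding bck_def by simp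
      next
        case False
        hence "w \<in> bck s" "w \<noteq> v" using wR unfolding Rs_def by auto
        hence "pos w \<le> pos v" using bp unfolding badp_def by blast
        hence "pos w = pos v" using le by simp
        thus False using pos_eq[OF vV(2) vV(1)] \<open>w \<noteq> v\<close> by simp
      qed
    qed
    show "b v s \<in> carrier G" unfolding b_def using fc by simp
    show "cc v s \<in> carrier G" unfolding cc_def using fc by simp
  qed
  have h11: "\<forall>v s v' s' y. (v,s) \<in> PP \<longrightarrow> (v',s') \<in> PP \<longrightarrow> y \<in> Y \<longrightarrow> y \<in> {v,s}
                 \<longrightarrow> y \<in> {v',s'} \<longrightarrow> v = v' \<and> s = s'"
  proof (intro allI impI)
    fix v s v' s' y assume p: "(v,s) \<in> PP" and p': "(v',s') \<in> PP" and y: "y \<in> {v,s}" "y \<in> {v',s'}"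
    have bp: "badp v s" and bp': "badp v' s'" using p p' unfolding PP_def by auto
    have vV: "v \<in> V" "v' \<in> V" using badp_v[OF bp] badp_v[OF bp'] unfolding bck_def using edge_ne by auto
    show "v = v' \<and> s = s'"
    proof (cases "y = v")
      case yv: True
      show ?thesis
      proof (cases "y = v'")
        case True thus ?thesis using yv bp bp' unfolding badp_def by auto
      next
        case False hence "y = s'" using y by blast
        thus ?thesis using yv bp bp' unfolding badp_def by auto
      qed
    next
      case False hence ys: "y = s" using y by blast
      show ?thesis
      proof (cases "y = v'")
        case True thus ?thesis using ys bp bp' unfolding badp_def by auto
      next
        case False hence ys': "y = s'" using y by blast
        have "pos v \<le> pos v'" using bp' badp_v[OF bp] ys ys' unfolding badp_def by auto
        moreover have "pos v' \<le> pos v" using bp badp_v[OF bp'] ys ys' unfolding badp_def by auto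
        ultimately have "v = v'" using pos_eq[OF vV] by simp
        thus ?thesis using ys ys' by simp
      qed
    qed
  qed
  have h12: "\<forall>y. Y = {y} \<longrightarrow> y \<in> crit \<longrightarrow> c y \<noteq> B"
  proof (intro allI impI)
    fix y assume Y1: "Y = {y}" and yc: "y \<in> crit"
    have bp: "badp w y" using Y1 yc unfolding Y_def crit_def crits_def badp_def by auto
    have "\<forall>r\<in>Rs w y. pos r < i"
    proof
      fix r assume r: "r \<in> Rs w y"
      show "pos r < i"
      proof (cases "r \<in> bck w")
        case True thus ?thesis using w unfolding bck_def by simp
      next
        case False
        hence r2: "r \<in> bck y" "r \<noteq> w" using r unfolding Rs_def by auto
        hence "pos r \<le> pos w" using yc unfolding crit_def crits_def by blast
        moreover have "pos r \<noteq> pos w" using pos_eq[OF _ w(1)] r2 unfolding bck_def using edge_ne by blast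
        ultimately show ?thesis using w by simp
      qed
    qed
    hence "Bp f w \<noteq> Cp f w y" using invd bp by blast
    thus "c y \<noteq> B" unfolding B_def c_def Cp_def by simp
  qed
  have ctx: "choice_ctx G Y crit c T PP b cc B bs D"
    unfolding choice_ctx_def choice_ctx_axioms_def
    using oddgrpG h1 h2 nD D1 h5 h6 h7 h8 h9 h10 h11 h12 by blast
  interpret C: choice_ctx G Y crit c T PP b cc B bs D by (rule ctx)
  obtain x where gx: "C.goal x" using C.choice by blast
  have gx1: "\<And>y. y \<in> Y \<Longrightarrow> x y \<in> carrier G \<and> x y \<noteq> \<one>" using gx unfolding C.goal_def by blast
  have gx2: "B \<otimes> finprod G x Y \<notin> bs" using gx unfolding C.goal_def by blast
  have gx3: "\<And>y. y \<in> crit \<Longrightarrow> c y \<otimes> x y \<noteq> B \<otimes> finprod G x Y \<and> c y \<otimes> x y \<notin> T y"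
    using gx unfolding C.goal_def by blast
  have gx4: "\<And>v s. (v,s) \<in> PP \<Longrightarrow> (if v \<in> Y then x v else \<one>) \<otimes> b v s \<noteq> (if s \<in> Y then x s else \<one>) \<otimes> cc v s"
    using gx unfolding C.goal_def by blast
  define f' where "f' = upd w x f"
  have xc: "\<And>y. y \<in> Y \<Longrightarrow> x y \<in> carrier G" using gx1 by blast
  have f'c: "\<And>e. f' e \<in> carrier G"
  proof -
    fix e
    show "f' e \<in> carrier G"
    proof (cases "\<exists>y\<in>fwd w. e = {w,y}")
      case True
      hence "(SOME y. y \<in> fwd w \<and> e = {w,y}) \<in> fwd w" by (metis (mono_tags, lifting) someI_ex)
      thus ?thesis using True xc unfolding f'_def upd_def Y_def by simp
    next
      case False thus ?thesis using fc unfolding f'_def upd_def by simp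
    qed
  qed
  have Fs: "\<And>u z. u \<noteq> w \<Longrightarrow> (z = w \<longrightarrow> u \<notin> fwd w) \<Longrightarrow> f' {u,z} = f {u,z}"
    unfolding f'_def by (rule upd_same)
  have Ff: "\<And>y. y \<in> Y \<Longrightarrow> f' {y,w} = x y \<and> f' {w,y} = x y"
    unfolding f'_def Y_def using upd_fwd by blast
  obtain y0 where y0: "y0 \<in> fwd w" using fw by blast
  have wnf: "\<not> fin i w"
  proof
    assume "fin i w"
    moreover have "y0 \<in> nbrs w" "pos y0 > i" using y0 w fwd_sub unfolding fwd_def by auto
    ultimately show False using w unfolding fin_def by auto
  qed
  have S_old: "\<And>u. u \<in> V \<Longrightarrow> fin i u \<Longrightarrow> S f' u = S f u"
  proof -
    fix u assume u: "u \<in> V" and fu: "fin i u"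
    have uw: "u \<noteq> w" using fu wnf by blast
    show "S f' u = S f u" unfolding S_def
    proof (rule finprod_cong')
      show "(\<lambda>t. f {t,u}) \<in> nbrs u \<rightarrow> carrier G" using fc by blast
    next
      fix t assume t: "t \<in> nbrs u"
      show "f' {t,u} = f {t,u}"
      proof (cases "t = w")
        case True
        have "u \<notin> fwd w" using fwd_not_fin fu w by blast
        hence "f' {u,t} = f {u,t}" using Fs uw True by blast
        thus ?thesis by (simp add: insert_commute)
      next
        case False thus ?thesis using Fs uw by blast
      qed
    qed simp
  qed
  have S_w: "S f' w = B \<otimes> finprod G x Y"
  proof -
    have "S f' w = finprod G (\<lambda>u. f' {u,w}) (bck w \<union> fwd w)"
      unfolding S_def using nbrs_split[OF w(1)] by simp
    also have "\<dots> = finprod G (\<lambda>u. f' {u,w}) (bck w) \<otimes> finprod G (\<lambda>u. f' {u,w}) (fwd w)"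
      using bck_fin fwd_fin bck_fwd_disj f'c by (intro finprod_Un_disjoint) auto
    also have "finprod G (\<lambda>u. f' {u,w}) (bck w) = B"
      unfolding B_def Bp_def
    proof (rule finprod_cong')
      fix u assume ub: "u \<in> bck w"
      have "u \<noteq> w" using ub unfolding bck_def by auto
      moreover have "u \<notin> fwd w" using ub bck_fwd_disj[of w] by blast
      ultimately show "f' {u,w} = f {u,w}" using Fs by blast
    qed (use fc in auto)
    also have "finprod G (\<lambda>u. f' {u,w}) (fwd w) = finprod G x Y"
      unfolding Y_def
    proof (rule finprod_cong')
      fix u assume "u \<in> fwd w"
      thus "f' {u,w} = x u" using Ff unfolding Y_def by blast
    qed (use xc[unfolded Y_def] in auto)
    finally show ?thesis .
  qed
  have S_crit: "\<And>s. s \<in> crit \<Longrightarrow> S f' s = c s \<otimes> x s"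
  proof -
    fix s assume sc: "s \<in> crit"
    have sY: "s \<in> Y" and fs: "fwd s = {}" using sc unfolding crit_def crits_def Y_def by auto
    have sV: "s \<in> V" using sY unfolding Y_def fwd_def using edge_ne by blast
    have sw: "s \<noteq> w" using sY unfolding Y_def fwd_def by auto
    have wb: "w \<in> bck s" using sY vY by blast
    have "nbrs s = insert w (bck s - {w})" using nbrs_split[OF sV] fs wb by auto
    hence "S f' s = finprod G (\<lambda>u. f' {u,s}) (insert w (bck s - {w}))" unfolding S_def by simp
    also have "\<dots> = f' {w,s} \<otimes> finprod G (\<lambda>u. f' {u,s}) (bck s - {w})"
      using bck_fin f'c by (intro finprod_insert) auto
    also have "finprod G (\<lambda>u. f' {u,s}) (bck s - {w}) = c s"
      unfolding c_def
    proof (rule finprod_cong')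
      fix u assume "u \<in> bck s - {w}"
      thus "f' {u,s} = f {u,s}" using Fs sw by blast
    qed (use fc in auto)
    also have "f' {w,s} = x s" using Ff sY by blast
    finally show "S f' s = c s \<otimes> x s" using xc[OF sY] h9 sc by (simp add: m_comm)
  qed
  have newfin: "\<And>u. u \<in> V \<Longrightarrow> fin (Suc i) u \<Longrightarrow> \<not> fin i u \<Longrightarrow> u = w \<or> u \<in> crit"
  proof -
    fix u assume u: "u \<in> V" and f1: "fin (Suc i) u" and f0: "\<not> fin i u"
    show "u = w \<or> u \<in> crit"
    proof (cases "u = w")
      case True thus ?thesis by simp
    next
      case uw: False
      have pu: "pos u \<noteq> i" using pos_eq[OF u w(1)] uw w by auto
      have npu: "\<not> pos u < i" using f0 unfolding fin_def by blast
      have all: "\<forall>z\<in>nbrs u. pos z < Suc i" using f1 pu npu unfolding fin_def by auto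
      obtain z where z: "z \<in> nbrs u" "\<not> pos z < i" using f0 unfolding fin_def by blast
      have "pos z = i" using all z by auto
      moreover have zV: "z \<in> V" using z nbrs_sub by blast
      ultimately have zw: "z = w" using pos_eq[OF zV w(1)] w by simp
      have e1: "{w,u} \<in> E" using z zw unfolding nbrs_def by simp
      have "pos w < pos u" using pu npu w by simp
      hence "u \<in> fwd w" using e1 unfolding fwd_def by (simp add: insert_commute)
      moreover have "fwd u = {}"
      proof -
        have "\<And>t. t \<in> fwd u \<Longrightarrow> False"
        proof -
          fix t assume "t \<in> fwd u"
          hence "t \<in> nbrs u" "pos u < pos t" using fwd_sub unfolding fwd_def by auto
          thus False using all pu npu by auto
        qed
        thus ?thesis by blast
      qed
      moreover have "\<forall>t\<in>bck u. pos t \<le> pos w"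
      proof
        fix t assume "t \<in> bck u"
        hence "t \<in> nbrs u" using bck_sub by blast
        hence "pos t < Suc i" using all by blast
        thus "pos t \<le> pos w" using w by simp
      qed
      ultimately show ?thesis unfolding crit_def crits_def by blast
    qed
  qed
  have fVI: "\<And>u. u \<in> V \<Longrightarrow> fin i u \<Longrightarrow> fin (Suc i) u" unfolding fin_def by auto
  have key: "\<And>u v. {u,v} \<in> E \<Longrightarrow> fin (Suc i) u \<Longrightarrow> fin (Suc i) v \<Longrightarrow> \<not> fin i u \<Longrightarrow> S f' u \<noteq> S f' v"
  proof -
    fix u v assume e: "{u,v} \<in> E" and fu: "fin (Suc i) u" and fv: "fin (Suc i) v" and nu: "\<not> fin i u"
    have uV: "u \<in> V" and vV: "v \<in> V" and uv: "u \<noteq> v" using edge_ne[OF e] by auto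
    have vnu: "v \<in> nbrs u" using e unfolding nbrs_def by (simp add: insert_commute)
    show "S f' u \<noteq> S f' v"
    proof (cases "u = w")
      case uw: True
      show ?thesis
      proof (cases "fin i v")
        case True
        have "v \<notin> fwd w" using fwd_not_fin True w by blast
        hence "v \<in> bck w" using nbrs_split[OF w(1)] vnu uw by blast
        hence "S f v \<in> bs" unfolding bs_def by blast
        thus ?thesis using S_old[OF vV True] S_w gx2 uw by auto
      next
        case False
        hence "v \<in> crit" using newfin[OF vV fv] uv uw by blast
        hence "S f' v \<noteq> S f' w" using S_crit gx3 S_w by simp
        thus ?thesis using uw by simp
      qed
    next
      case uw: False
      hence uc: "u \<in> crit" using newfin[OF uV fu nu] by blast
      have fu0: "fwd u = {}" using uc unfolding crit_def crits_def by blast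
      have vb: "v \<in> bck u" using nbrs_split[OF uV] vnu fu0 by blast
      show ?thesis
      proof (cases "v = w")
        case True thus ?thesis using S_crit[OF uc] gx3[OF uc] S_w by simp
      next
        case vw: False
        show ?thesis
        proof (cases "fin i v")
          case True
          hence "S f' v \<in> T u" using S_old[OF vV True] vb vw unfolding T_def by blast
          thus ?thesis using S_crit[OF uc] gx3[OF uc] by auto
        next
          case False
          hence "v \<in> crit" using newfin[OF vV fv] vw by blast
          hence "fwd v = {}" unfolding crit_def crits_def by blast
          moreover have "u \<in> fwd v" using vb in_bck_fwd by blast
          ultimately show ?thesis by blast
        qed
      qed
    qed
  qed
  have partd: "\<And>v s. badp v s \<Longrightarrow> \<forall>r\<in>Rs v s. pos r < Suc i \<Longrightarrow> Bp f' v \<noteq> Cp f' v s"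
  proof -
    fix v s assume bp: "badp v s" and R: "\<forall>r\<in>Rs v s. pos r < Suc i"
    show "Bp f' v \<noteq> Cp f' v s"
    proof (cases "w \<in> Rs v s")
      case True
      have p: "(v,s) \<in> PP" unfolding PP_def using bp True R w by auto
      have vw: "v \<noteq> w" and sw: "s \<noteq> w" using PPw[OF p] by auto
      have bvs: "b v s \<in> carrier G" "cc v s \<in> carrier G" using h10 p by blast+
      have e1: "Bp f' v = (if v \<in> Y then x v else \<one>) \<otimes> b v s"
      proof (cases "v \<in> Y")
        case True
        hence wb: "w \<in> bck v" using vY by blast
        have "Bp f' v = finprod G (\<lambda>u. f' {u,v}) (insert w (bck v - {w}))"
          unfolding Bp_def using wb by (simp add: insert_absorb)
        also have "\<dots> = f' {w,v} \<otimes> finprod G (\<lambda>u. f' {u,v}) (bck v - {w})"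
          using bck_fin f'c by (intro finprod_insert) auto
        also have "finprod G (\<lambda>u. f' {u,v}) (bck v - {w}) = b v s"
          unfolding b_def
        proof (rule finprod_cong')
          fix u assume "u \<in> bck v - {w}"
          thus "f' {u,v} = f {u,v}" using Fs vw by blast
        qed (use fc in auto)
        also have "f' {w,v} = x v" using Ff True by blast
        finally show ?thesis using True by simp
      next
        case False
        hence wb: "w \<notin> bck v" using vY by blast
        have "Bp f' v = b v s" unfolding Bp_def b_def
        proof (rule finprod_cong')
          fix u assume "u \<in> bck v - {w}"
          thus "f' {u,v} = f {u,v}" using Fs vw by blast
        qed (use fc wb in auto)
        thus ?thesis using False bvs by simp
      qed
      have e2: "Cp f' v s = (if s \<in> Y then x s else \<one>) \<otimes> cc v s"
      proof (cases "s \<in> Y")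
        case True
        hence wb: "w \<in> bck s" using vY by blast
        have "Cp f' v s = finprod G (\<lambda>u. f' {u,s}) (insert w (bck s - {v,w}))"
        proof -
          have "bck s - {v} = insert w (bck s - {v,w})" using wb vw by blast
          thus ?thesis unfolding Cp_def by simp
        qed
        also have "\<dots> = f' {w,s} \<otimes> finprod G (\<lambda>u. f' {u,s}) (bck s - {v,w})"
          using bck_fin f'c by (intro finprod_insert) auto
        also have "finprod G (\<lambda>u. f' {u,s}) (bck s - {v,w}) = cc v s"
          unfolding cc_def
        proof (rule finprod_cong')
          fix u assume "u \<in> bck s - {v,w}"
          thus "f' {u,s} = f {u,s}" using Fs sw by blast
        qed (use fc in auto)
        also have "f' {w,s} = x s" using Ff True by blast
        finally show ?thesis using True by simp
      next
        case False
        hence wb: "w \<notin> bck s" using vY by blast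
        have "Cp f' v s = cc v s" unfolding Cp_def cc_def
        proof (rule finprod_cong')
          fix u assume "u \<in> bck s - {v,w}"
          thus "f' {u,s} = f {u,s}" using Fs sw by blast
        qed (use fc wb in auto)
        thus ?thesis using False bvs by simp
      qed
      show ?thesis using gx4[OF p] e1 e2 by simp
    next
      case False
      have "\<forall>r\<in>Rs v s. pos r < i"
      proof
        fix r assume r: "r \<in> Rs v s"
        have rw: "r \<noteq> w" using False r by blast
        have rV: "r \<in> V" using Rs_sub[OF bp] r by blast
        have "pos r \<noteq> i" using pos_eq[OF rV w(1)] w rw by auto
        moreover have "pos r < Suc i" using R r by blast
        ultimately show "pos r < i" by simp
      qed
      hence old: "Bp f v \<noteq> Cp f v s" using invd bp by blast
      have "Bp f' v = Bp f v" unfolding Bp_def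
      proof (rule finprod_cong')
        fix u assume u: "u \<in> bck v"
        hence "u \<noteq> w" using False unfolding Rs_def by blast
        moreover have "v = w \<longrightarrow> u \<notin> fwd w" using u bck_fwd_disj by blast
        ultimately show "f' {u,v} = f {u,v}" using Fs by blast
      qed (use fc in auto)
      moreover have "Cp f' v s = Cp f v s" unfolding Cp_def
      proof (rule finprod_cong')
        fix u assume u: "u \<in> bck s - {v}"
        hence "u \<noteq> w" using False unfolding Rs_def by blast
        moreover have "s = w \<longrightarrow> u \<notin> fwd w" using u bck_fwd_disj by blast
        ultimately show "f' {u,s} = f {u,s}" using Fs by blast
      qed (use fc in auto)
      ultimately show ?thesis using old by simp
    qed
  qed
  have partb: "\<And>u v. {u,v} \<in> E \<Longrightarrow> pos u < Suc i \<Longrightarrow> f' {u,v} \<noteq> \<one>"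
  proof -
    fix u v assume e: "{u,v} \<in> E" and pu: "pos u < Suc i"
    have uV: "u \<in> V" "v \<in> V" using edge_ne[OF e] by auto
    show "f' {u,v} \<noteq> \<one>"
    proof (cases "u = w")
      case True
      have vn: "v \<in> nbrs w" using e True unfolding nbrs_def by (simp add: insert_commute)
      show ?thesis
      proof (cases "v \<in> fwd w")
        case True
        hence "f' {w,v} = x v" "x v \<noteq> \<one>" using Ff gx1 unfolding Y_def by blast+
        thus ?thesis using \<open>u = w\<close> by simp
      next
        case False
        hence vb: "v \<in> bck w" using vn nbrs_split[OF w(1)] by blast
        hence "pos v < i" "v \<noteq> w" using w unfolding bck_def by auto
        hence "f {v,u} \<noteq> \<one>" using invb edge_sym[OF e] by blast
        moreover have "f' {v,u} = f {v,u}" using Fs \<open>v \<noteq> w\<close> False True by blast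
        ultimately show ?thesis by (simp add: insert_commute)
      qed
    next
      case False
      hence pu': "pos u < i" using pu pos_eq[OF uV(1) w(1)] w by (auto simp: less_Suc_eq)
      have "u \<notin> fwd w" using pu' w unfolding fwd_def by auto
      hence "f' {u,v} = f {u,v}" using Fs False by blast
      thus ?thesis using invb[OF e pu'] by simp
    qed
  qed
  have "Inv (Suc i) f'" unfolding Inv_def
  proof (intro conjI allI impI)
    fix e show "f' e \<in> carrier G" by (rule f'c)
  next
    fix u v assume "{u,v} \<in> E" "pos u < Suc i" thus "f' {u,v} \<noteq> \<one>" by (rule partb)
  next
    fix u v assume e: "{u,v} \<in> E" and fu: "fin (Suc i) u" and fv: "fin (Suc i) v"
    have uV: "u \<in> V" "v \<in> V" using edge_ne[OF e] by auto
    show "S f' u \<noteq> S f' v"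
    proof (cases "fin i u")
      case fu0: True
      show ?thesis
      proof (cases "fin i v")
        case True thus ?thesis using fu0 S_old uV invc[OF e fu0 True] by simp
      next
        case False
        hence "S f' v \<noteq> S f' u" using key[OF edge_sym[OF e] fv fu] by blast
        thus ?thesis by simp
      qed
    next
      case False thus ?thesis using key[OF e fu fv] by blast
    qed
  next
    fix v s assume "badp v s" "\<forall>r\<in>Rs v s. pos r < Suc i"
    thus "Bp f' v \<noteq> Cp f' v s" by (rule partd)
  qed
  thus ?thesis by blast
qed

end

context greedy begin

lemma all_inv: "\<exists>f. Inv i f"
proof (induction i)
  case 0 thus ?case using Inv0 by blast
next
  case (Suc i)
  then obtain f where inv: "Inv i f" by blast
  show ?case
  proof (cases "\<exists>w\<in>V. pos w = i")
    case False thus ?thesis using step_skip[OF inv] by blast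
  next
    case True
    then obtain w where w: "w \<in> V" "pos w = i" by blast
    show ?thesis
    proof (cases "fwd w = {}")
      case True thus ?thesis using step_sink[OF inv w] by blast
    next
      case False thus ?thesis using step_main[OF inv w] by blast
    qed
  qed
qed

lemma wsum_S: assumes fc: "\<And>e. f e \<in> carrier G" shows "wsum G E f v = S f v"
proof -
  have eq: "{e \<in> E. v \<in> e} = (\<lambda>u. {u,v}) ` nbrs v"
  proof
    show "{e \<in> E. v \<in> e} \<subseteq> (\<lambda>u. {u,v}) ` nbrs v"
    proof
      fix e assume "e \<in> {e \<in> E. v \<in> e}"
      hence "e \<in> E" "v \<in> e" by auto
      then obtain t where t: "e = {v,t}" "t \<in> nbrs v" using other_end by blast
      hence "e = {t,v}" by (simp add: insert_commute)
      thus "e \<in> (\<lambda>u. {u,v}) ` nbrs v" using t by blast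
    qed
  next
    show "(\<lambda>u. {u,v}) ` nbrs v \<subseteq> {e \<in> E. v \<in> e}" unfolding nbrs_def by auto
  qed
  have inj: "inj_on (\<lambda>u. {u,v}) (nbrs v)"
    unfolding inj_on_def by (auto simp: doubleton_eq_iff)
  have "wsum G E f v = finprod G f ((\<lambda>u. {u,v}) ` nbrs v)" unfolding wsum_def eq ..
  also have "\<dots> = finprod G (\<lambda>u. f {u,v}) (nbrs v)"
    using fc inj by (intro finprod_reindex) auto
  finally show ?thesis unfolding S_def .
qed

lemma colourable: "group_sum_colourable G E"
proof -
  define N where "N = Suc (\<Sum>v\<in>V. pos v)"
  have pN: "\<And>v. v \<in> V \<Longrightarrow> pos v < N"
  proof -
    fix v assume "v \<in> V"
    hence "pos v \<le> (\<Sum>v\<in>V. pos v)" using Vfin by (intro member_le_sum) auto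
    thus "pos v < N" unfolding N_def by simp
  qed
  obtain f where inv: "Inv N f" using all_inv by blast
  have fc: "\<And>e. f e \<in> carrier G" using inv unfolding Inv_def by blast
  have finN: "\<And>u. u \<in> V \<Longrightarrow> fin N u" unfolding fin_def using pN by blast
  show ?thesis unfolding group_sum_colourable_def
  proof (intro exI conjI allI impI ballI)
    fix e assume e: "e \<in> E"
    then obtain a b where ab: "e = {a,b}" using sg unfolding simple_graph_def by blast
    have "a \<in> V" using e ab edge_ne by blast
    hence "f {a,b} \<noteq> \<one>" using inv e ab pN unfolding Inv_def by blast
    thus "f e \<in> carrier G - {\<one>}" using fc ab by simp
  next
    fix u v assume e: "{u,v} \<in> E" and "u \<noteq> v"
    have "u \<in> V" "v \<in> V" using edge_ne[OF e] by auto
    hence "S f u \<noteq> S f v" using inv e finN unfolding Inv_def by blast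
    thus "wsum G E f u \<noteq> wsum G E f v" using wsum_S[OF fc] by simp
  qed
qed

end

definition ewithin :: "'v set \<Rightarrow> 'v set set \<Rightarrow> bool" where
  "ewithin W F \<longleftrightarrow> (\<forall>e\<in>F. \<exists>u v. e = {u,v} \<and> u \<noteq> v \<and> u \<in> W \<and> v \<in> W)"

definition ispath :: "'v set \<Rightarrow> 'v set set \<Rightarrow> 'v list \<Rightarrow> bool" where
  "ispath W F ps \<longleftrightarrow> ps \<noteq> [] \<and> distinct ps \<and> set ps \<subseteq> W \<and>
     (\<forall>j. Suc j < length ps \<longrightarrow> {ps ! j, ps ! Suc j} \<in> F)"

lemma ewithin_edge: "ewithin W F \<Longrightarrow> {x,t} \<in> F \<Longrightarrow> x \<noteq> t \<and> x \<in> W \<and> t \<in> W"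
proof -
  assume "ewithin W F" "{x,t} \<in> F"
  then obtain u v where uv: "{x,t} = {u,v}" "u \<noteq> v" "u \<in> W" "v \<in> W" unfolding ewithin_def by blast
  hence "(x = u \<and> t = v) \<or> (x = v \<and> t = u)" unfolding doubleton_eq_iff by blast
  thus ?thesis using uv by blast
qed

lemma path_len: "finite W \<Longrightarrow> ispath W F ps \<Longrightarrow> length ps \<le> card W"
proof -
  assume W: "finite W" and p: "ispath W F ps"
  hence "length ps = card (set ps)" "set ps \<subseteq> W" unfolding ispath_def by (auto simp: distinct_card)
  thus ?thesis using card_mono[OF W] by simp
qed

lemma path_snoc:
  assumes "ispath W F ps" "t \<notin> set ps" "t \<in> W" "{last ps, t} \<in> F"
  shows "ispath W F (ps @ [t])"
  unfolding ispath_def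
proof (intro conjI allI impI)
  show "ps @ [t] \<noteq> []" by simp
  show "distinct (ps @ [t])" using assms unfolding ispath_def by simp
  show "set (ps @ [t]) \<subseteq> W" using assms unfolding ispath_def by simp
  fix j assume j: "Suc j < length (ps @ [t])"
  show "{(ps @ [t]) ! j, (ps @ [t]) ! Suc j} \<in> F"
  proof (cases "Suc j < length ps")
    case True thus ?thesis using assms j unfolding ispath_def by (simp add: nth_append)
  next
    case False
    hence sj: "Suc j = length ps" using j by simp
    have "ps \<noteq> []" using assms unfolding ispath_def by simp
    moreover have "j = length ps - 1" using sj by simp
    ultimately have "last ps = ps ! j" by (simp add: last_conv_nth)
    thus ?thesis using assms sj by (simp add: nth_append)
  qed
qed

lemma leaf_exists:
  assumes W: "finite W" "W \<noteq> {}" and ew: "ewithin W F" and fo: "\<not> has_cycle F"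
  shows "\<exists>z\<in>W. card {e\<in>F. z \<in> e} \<le> 1"
proof (rule ccontr)
  assume "\<not> ?thesis"
  hence deg: "\<And>z. z \<in> W \<Longrightarrow> card {e\<in>F. z \<in> e} \<ge> 2" by force
  obtain z0 where z0: "z0 \<in> W" using W by blast
  have p0: "ispath W F [z0]" unfolding ispath_def using z0 by simp
  have bnd: "\<forall>y. ispath W F y \<longrightarrow> length y < Suc (card W)" using path_len[OF W(1)] by (simp add: less_Suc_eq_le)
  obtain ps where ps1: "ispath W F ps" and nmax0: "\<forall>y. ispath W F y \<longrightarrow> length y \<le> length ps"
    using ex_has_greatest_nat[OF p0 bnd] by blast
  have nmax: "\<And>ps'. ispath W F ps' \<Longrightarrow> length ps' \<le> length ps" using nmax0 by blast
  have ps: "ispath W F ps" "length ps = length ps" using ps1 by auto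
  have psne: "ps \<noteq> []" and dps: "distinct ps" and psW: "set ps \<subseteq> W"
    using ps unfolding ispath_def by auto
  define x where "x = last ps"
  have xW: "x \<in> W" using psne psW unfolding x_def by auto
  have xl: "x = ps ! (length ps - 1)" unfolding x_def using psne by (simp add: last_conv_nth)
  define pr where "pr = (if length ps \<ge> 2 then {{x, ps ! (length ps - 2)}} else {})"
  have "card {e\<in>F. x \<in> e} \<ge> 2" using deg xW by blast
  moreover have "card pr \<le> 1" unfolding pr_def by simp
  moreover have finpr: "finite pr" unfolding pr_def by simp
  ultimately have "\<not> {e\<in>F. x \<in> e} \<subseteq> pr"
  proof -
    assume c2: "card {e\<in>F. x \<in> e} \<ge> 2" and c1: "card pr \<le> 1" and fp: "finite pr"
    show ?thesis
    proof
      assume "{e\<in>F. x \<in> e} \<subseteq> pr"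
      hence "card {e\<in>F. x \<in> e} \<le> card pr" using card_mono[OF fp] by blast
      thus False using c1 c2 by linarith
    qed
  qed
  then obtain e where e: "e \<in> F" "x \<in> e" "e \<notin> pr" by blast
  obtain a b where ab: "e = {a,b}" "a \<noteq> b" using ew e unfolding ewithin_def by blast
  have "\<exists>t. e = {x,t}"
  proof (cases "x = a")
    case True thus ?thesis using ab by blast
  next
    case False hence "x = b" using ab e by blast
    thus ?thesis using ab by (intro exI[of _ a]) (simp add: insert_commute)
  qed
  then obtain t where t: "e = {x,t}" by blast
  have tx: "t \<noteq> x" "t \<in> W" using ewithin_edge[OF ew, of x t] e t by auto
  show False
  proof (cases "t \<in> set ps")
    case False
    have "ispath W F (ps @ [t])" using path_snoc[OF ps(1) False tx(2)] e t x_def by simp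
    hence "length (ps @ [t]) \<le> length ps" using nmax by blast
    thus False using ps by simp
  next
    case True
    then obtain j where j: "j < length ps" "ps ! j = t" unfolding in_set_conv_nth by blast
    have jl: "j \<noteq> length ps - 1" using j tx xl by auto
    have jl2: "j \<noteq> length ps - 2"
    proof
      assume jj: "j = length ps - 2"
      hence "length ps \<ge> 2" using j jl by linarith
      hence "pr = {{x, t}}" unfolding pr_def using jj j by simp
      thus False using e t by simp
    qed
    have jlt: "j + 3 \<le> length ps" using j jl jl2 by linarith
    define vs where "vs = drop j ps"
    have lvs: "length vs = length ps - j" unfolding vs_def by simp
    have "has_cycle F" unfolding has_cycle_def
    proof (intro exI conjI allI impI)
      show "3 \<le> length vs" using lvs jlt by simp
      show "distinct vs" unfolding vs_def using dps by simp
      fix i assume i: "i < length vs"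
      show "{vs ! i, vs ! ((i + 1) mod length vs)} \<in> F"
      proof (cases "i + 1 < length vs")
        case True
        hence "(i + 1) mod length vs = i + 1" by simp
        moreover have "Suc (j + i) < length ps" using True lvs by simp
        ultimately show ?thesis using ps(1) unfolding ispath_def vs_def by (simp add: add.commute)
      next
        case False
        hence "i = length vs - 1" using i by simp
        have "i + 1 = length vs" using False i by simp
        hence "(i + 1) mod length vs = 0" by simp
        moreover have "vs ! i = x" using \<open>i = length vs - 1\<close> lvs xl jlt unfolding vs_def by simp
        moreover have "vs ! 0 = t" unfolding vs_def using j by simp
        ultimately show ?thesis using e t by simp
      qed
    qed
    thus False using fo by simp
  qed
qed

lemma has_cycle_mono: "F' \<subseteq> F \<Longrightarrow> has_cycle F' \<Longrightarrow> has_cycle F"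
  unfolding has_cycle_def by blast

lemma ewithin_fin: "finite W \<Longrightarrow> ewithin W F \<Longrightarrow> finite F"
proof -
  assume W: "finite W" and ew: "ewithin W F"
  have "\<And>e. e \<in> F \<Longrightarrow> e \<subseteq> W"
  proof -
    fix e assume "e \<in> F"
    then obtain u v where "e = {u,v}" "u \<in> W" "v \<in> W" using ew unfolding ewithin_def by blast
    thus "e \<subseteq> W" by simp
  qed
  hence "F \<subseteq> Pow W" by blast
  thus "finite F" using W finite_subset by blast
qed

lemma forest_card:
  "finite W \<Longrightarrow> W \<noteq> {} \<Longrightarrow> ewithin W F \<Longrightarrow> \<not> has_cycle F \<Longrightarrow> card F \<le> card W - 1"
proof (induction "card W" arbitrary: W F rule: less_induct)
  case less
  have finF: "finite F" using ewithin_fin less by blast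
  show ?case
  proof (cases "card W = 1")
    case True
    obtain z where z: "W = {z}" using card_1_singletonE[OF True] by blast
    have "F = {}"
    proof (rule ccontr)
      assume "F \<noteq> {}"
      then obtain e where "e \<in> F" by blast
      then obtain u v where "u \<noteq> v" "u \<in> W" "v \<in> W" using less(4) unfolding ewithin_def by blast
      thus False using z by simp
    qed
    thus ?thesis by simp
  next
    case False
    have "card W > 0" using less(2,3) by (simp add: card_gt_0_iff)
    hence cW: "card W \<ge> 2" using False by linarith
    obtain z where z: "z \<in> W" "card {e\<in>F. z \<in> e} \<le> 1" using leaf_exists less(2-5) by blast
    define W' where "W' = W - {z}"
    define F' where "F' = {e\<in>F. z \<notin> e}"
    have cW': "card W' = card W - 1" unfolding W'_def using z less(2) by simp
    have W'ne: "W' \<noteq> {}"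
    proof
      assume "W' = {}" hence "card W' = 0" by simp
      thus False using cW' cW by simp
    qed
    have ew': "ewithin W' F'" unfolding ewithin_def
    proof
      fix e assume e: "e \<in> F'"
      hence eF: "e \<in> F" and ze: "z \<notin> e" unfolding F'_def by auto
      obtain u v where uv: "e = {u,v}" "u \<noteq> v" "u \<in> W" "v \<in> W" using less(4) eF unfolding ewithin_def by blast
      hence "u \<in> W'" "v \<in> W'" using ze unfolding W'_def by auto
      thus "\<exists>u v. e = {u,v} \<and> u \<noteq> v \<and> u \<in> W' \<and> v \<in> W'" using uv by blast
    qed
    have nc': "\<not> has_cycle F'" using less(5) has_cycle_mono[of F' F] unfolding F'_def by blast
    have lt: "card W' < card W" using cW' cW by simp
    have finW': "finite W'" unfolding W'_def using less(2) by simp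
    have IH: "card F' \<le> card W' - 1" by (rule less(1)[OF lt finW' W'ne ew' nc'])
    have "F = F' \<union> {e\<in>F. z \<in> e}" unfolding F'_def by blast
    hence "card F \<le> card F' + card {e\<in>F. z \<in> e}" using card_Un_le[of F' "{e\<in>F. z \<in> e}"] by simp
    thus ?thesis using IH z cW' cW by linarith
  qed
qed

lemma no_cycle_empty: "\<not> has_cycle {}"
  unfolding has_cycle_def by force

lemma no_cycle_single: "\<not> has_cycle {e}"
proof
  assume "has_cycle {e}"
  then obtain vs where vs: "length vs \<ge> 3" "distinct vs"
    "\<forall>i < length vs. {vs ! i, vs ! ((i + 1) mod length vs)} \<in> {e}"
    unfolding has_cycle_def by blast
  have ne: "vs \<noteq> []" using vs(1) by auto
  have m1: "(0+1) mod length vs = 1" using vs(1) by simp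
  have m2: "(1+1) mod length vs = 2" using vs(1) by simp
  have l0: "0 < length vs" and l1: "1 < length vs" using vs(1) by linarith+
  have "{vs ! 0, vs ! ((0+1) mod length vs)} \<in> {e}" using vs(3) l0 by blast
  hence "{vs ! 0, vs ! 1} = e" unfolding m1 by simp
  moreover have "{vs ! 1, vs ! ((1+1) mod length vs)} \<in> {e}" using vs(3) l1 by blast
  hence "{vs ! 1, vs ! 2} = e" unfolding m2 by simp
  ultimately have "{vs ! 0, vs ! 1} = {vs ! 1, vs ! 2}" by simp
  hence "vs ! 0 = vs ! 2 \<or> vs ! 0 = vs ! 1" unfolding doubleton_eq_iff by blast
  moreover have "vs ! 0 \<noteq> vs ! 2" using nth_eq_iff_index_eq[OF vs(2), of 0 2] vs(1) ne by simp
  moreover have "vs ! 0 \<noteq> vs ! 1" using nth_eq_iff_index_eq[OF vs(2), of 0 1] vs(1) ne by simp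
  ultimately show False by blast
qed

lemma sg_finE: "simple_graph V E \<Longrightarrow> finite E"
proof -
  assume sg: "simple_graph V E"
  have "\<And>e. e \<in> E \<Longrightarrow> e \<subseteq> V"
  proof -
    fix e assume "e \<in> E"
    then obtain u v where "e = {u,v}" "u \<in> V" "v \<in> V" using sg unfolding simple_graph_def by blast
    thus "e \<subseteq> V" by simp
  qed
  hence "E \<subseteq> Pow V" by blast
  thus "finite E" using sg unfolding simple_graph_def using finite_subset by blast
qed

lemma decomp_exists: "simple_graph V E \<Longrightarrow> forest_decomposition E (card E)"
proof -
  assume sg: "simple_graph V E"
  obtain h where h: "bij_betw h {0..<card E} E" using ex_bij_betw_nat_finite sg_finE[OF sg] by blast
  show ?thesis unfolding forest_decomposition_def
  proof (intro exI conjI allI impI)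
    show "(\<Union>i<card E. {h i}) = E" using h unfolding bij_betw_def by (auto simp: atLeast0LessThan)
  next
    fix i assume "i < card E" thus "forest {h i}" unfolding forest_def using no_cycle_single by blast
  next
    fix i j assume "i < card E" "j < card E" "i \<noteq> j"
    thus "{h i} \<inter> {h j} = {}" using h unfolding bij_betw_def inj_on_def by auto
  qed
qed

lemma decomp_Suc: "forest_decomposition E k \<Longrightarrow> forest_decomposition E (Suc k)"
proof -
  assume "forest_decomposition E k"
  then obtain Fs where Fs: "(\<Union>i<k. Fs i) = E" "\<forall>i<k. forest (Fs i)"
    "\<forall>i<k. \<forall>j<k. i \<noteq> j \<longrightarrow> Fs i \<inter> Fs j = {}" unfolding forest_decomposition_def by blast
  show ?thesis unfolding forest_decomposition_def
  proof (intro exI[of _ "Fs(k := {})"] conjI allI impI)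
    show "(\<Union>i<Suc k. (Fs(k := {})) i) = E" using Fs(1) by (auto simp: lessThan_Suc)
  next
    fix i assume "i < Suc k" thus "forest ((Fs(k := {})) i)"
      using Fs(2) no_cycle_empty unfolding forest_def by (cases "i = k") auto
  next
    fix i j assume "i < Suc k" "j < Suc k" "i \<noteq> j"
    thus "(Fs(k := {})) i \<inter> (Fs(k := {})) j = {}" using Fs(3) by (auto simp: less_Suc_eq)
  qed
qed

lemma decomp_pad: "forest_decomposition E k \<Longrightarrow> k \<le> a \<Longrightarrow> forest_decomposition E a"
proof (induction a)
  case 0 thus ?case by simp
next
  case (Suc a)
  show ?case
  proof (cases "k \<le> a")
    case True thus ?thesis using Suc decomp_Suc by blast
  next
    case False hence "k = Suc a" using Suc by simp
    thus ?thesis using Suc by simp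
  qed
qed

lemma arb_decomp: "simple_graph V E \<Longrightarrow> arboricity E \<le> a \<Longrightarrow> forest_decomposition E a"
proof -
  assume sg: "simple_graph V E" and ar: "arboricity E \<le> a"
  have "forest_decomposition E (arboricity E)"
    unfolding arboricity_def by (rule LeastI_ex) (use decomp_exists[OF sg] in blast)
  thus ?thesis using decomp_pad ar by blast
qed

lemma sg_edge:
  assumes "simple_graph V E" "e \<in> E"
  obtains u v where "e = {u,v}" "u \<noteq> v" "u \<in> V" "v \<in> V"
  using assms unfolding simple_graph_def by blast

lemma card_filter_sum: "finite A \<Longrightarrow> card {x\<in>A. P x} = (\<Sum>x\<in>A. if P x then 1 else 0)"
  using sum.inter_filter[of A "\<lambda>_. 1::nat" P] by simp

lemma handshake:
  assumes sg: "simple_graph V E" and W: "W \<subseteq> V"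
  defines "EW \<equiv> {e\<in>E. e \<subseteq> W}"
  shows "(\<Sum>z\<in>W. card {u\<in>W. {u,z} \<in> E}) = 2 * card EW"
proof -
  have finV: "finite V" using sg unfolding simple_graph_def by blast
  have finW: "finite W" using finV W finite_subset by blast
  have finE: "finite E" by (rule sg_finE[OF sg])
  have finEW: "finite EW" unfolding EW_def using finE by simp
  have d: "card {u\<in>W. {u,z} \<in> E} = card {e\<in>EW. z \<in> e}" if z: "z \<in> W" for z
  proof -
    have inj: "inj_on (\<lambda>u. {u,z}) {u\<in>W. {u,z} \<in> E}" unfolding inj_on_def by (auto simp: doubleton_eq_iff)
    have img: "(\<lambda>u. {u,z}) ` {u\<in>W. {u,z} \<in> E} = {e\<in>EW. z \<in> e}"
    proof
      show "(\<lambda>u. {u,z}) ` {u\<in>W. {u,z} \<in> E} \<subseteq> {e\<in>EW. z \<in> e}" unfolding EW_def using z by auto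
    next
      show "{e\<in>EW. z \<in> e} \<subseteq> (\<lambda>u. {u,z}) ` {u\<in>W. {u,z} \<in> E}"
      proof
        fix e assume e: "e \<in> {e\<in>EW. z \<in> e}"
        hence eE: "e \<in> E" and eW: "e \<subseteq> W" and ze: "z \<in> e" unfolding EW_def by auto
        obtain a b where ab: "e = {a,b}" "a \<noteq> b" using sg_edge[OF sg eE] by blast
        have "\<exists>t. e = {t,z}"
        proof (cases "z = a")
          case True thus ?thesis using ab by (intro exI[of _ b]) (simp add: insert_commute)
        next
          case False hence "z = b" using ab ze by blast
          thus ?thesis using ab by blast
        qed
        then obtain t where t: "e = {t,z}" by blast
        have "t \<in> W" using eW t by simp
        thus "e \<in> (\<lambda>u. {u,z}) ` {u\<in>W. {u,z} \<in> E}" using t eE by blast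
      qed
    qed
    show ?thesis using card_image[OF inj] img by simp
  qed
  have "(\<Sum>z\<in>W. card {u\<in>W. {u,z} \<in> E}) = (\<Sum>z\<in>W. card {e\<in>EW. z \<in> e})"
    using d by (rule sum.cong[OF refl])
  also have "\<dots> = (\<Sum>z\<in>W. \<Sum>e\<in>EW. if z \<in> e then 1 else 0)"
    using finEW by (simp add: card_filter_sum)
  also have "\<dots> = (\<Sum>e\<in>EW. \<Sum>z\<in>W. if z \<in> e then 1 else 0)" by (rule sum.swap)
  also have "\<dots> = (\<Sum>e\<in>EW. card {z\<in>W. z \<in> e})"
    using finW by (simp add: card_filter_sum)
  also have "\<dots> = (\<Sum>e\<in>EW. 2)"
  proof (rule sum.cong[OF refl])
    fix e assume e: "e \<in> EW"
    hence eE: "e \<in> E" and eW: "e \<subseteq> W" unfolding EW_def by auto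
    obtain a b where ab: "e = {a,b}" "a \<noteq> b" using sg_edge[OF sg eE] by blast
    have "{z\<in>W. z \<in> e} = e" using eW by blast
    thus "card {z\<in>W. z \<in> e} = 2" using ab by simp
  qed
  also have "\<dots> = 2 * card EW" by simp
  finally show ?thesis .
qed

lemma degenerate:
  assumes sg: "simple_graph V E" and fd: "forest_decomposition E a" and a1: "1 \<le> a"
    and W: "W \<subseteq> V" "W \<noteq> {}"
  shows "\<exists>z\<in>W. card {u\<in>W. {u,z} \<in> E} \<le> 2*a - 1"
proof (rule ccontr)
  assume "\<not> ?thesis"
  hence big: "\<And>z. z \<in> W \<Longrightarrow> 2*a \<le> card {u\<in>W. {u,z} \<in> E}" by force
  define EW where "EW = {e\<in>E. e \<subseteq> W}"
  obtain Fs where Fs: "(\<Union>i<a. Fs i) = E" "\<forall>i<a. forest (Fs i)"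
    using fd unfolding forest_decomposition_def by blast
  have finV: "finite V" using sg unfolding simple_graph_def by blast
  have finW: "finite W" using finV W finite_subset by blast
  have ci: "card (Fs i \<inter> EW) \<le> card W - 1" if i: "i < a" for i
  proof (rule forest_card[OF finW W(2)])
    show "ewithin W (Fs i \<inter> EW)" unfolding ewithin_def
    proof
      fix e assume e: "e \<in> Fs i \<inter> EW"
      hence eE: "e \<in> E" and eW: "e \<subseteq> W" unfolding EW_def by auto
      obtain u v where uv: "e = {u,v}" "u \<noteq> v" using sg_edge[OF sg eE] by blast
      thus "\<exists>u v. e = {u,v} \<and> u \<noteq> v \<and> u \<in> W \<and> v \<in> W" using eW by blast
    qed
    show "\<not> has_cycle (Fs i \<inter> EW)" using Fs(2) i has_cycle_mono[of "Fs i \<inter> EW" "Fs i"]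
      unfolding forest_def by blast
  qed
  have "EW = (\<Union>i<a. Fs i \<inter> EW)" using Fs(1) unfolding EW_def by blast
  hence "card EW \<le> (\<Sum>i<a. card (Fs i \<inter> EW))" using card_UN_le[of "{..<a}" "\<lambda>i. Fs i \<inter> EW"] by simp
  also have "\<dots> \<le> (\<Sum>i<a. card W - 1)" using ci by (intro sum_mono) simp
  also have "\<dots> = a * (card W - 1)" by simp
  finally have cEW: "card EW \<le> a * (card W - 1)" .
  have "(\<Sum>z\<in>W. 2*a) \<le> (\<Sum>z\<in>W. card {u\<in>W. {u,z} \<in> E})" using big by (intro sum_mono) simp
  hence "2 * a * card W \<le> 2 * card EW" using handshake[OF sg W(1)] unfolding EW_def by (simp add: mult.commute)
  also have "\<dots> \<le> 2 * (a * (card W - 1))" using cEW by simp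
  finally have "a * card W \<le> a * (card W - 1)" by simp
  moreover have "card W \<ge> 1" using finW W(2) by (simp add: Suc_leI card_gt_0_iff)
  ultimately show False using a1 by (metis diff_less less_one mult_le_cancel1 not_le zero_less_one leD less_le_trans)
qed

lemma order_exists:
  fixes V :: "'v set"
  assumes sg: "simple_graph V E"
    and deg: "\<And>W. W \<subseteq> V \<Longrightarrow> W \<noteq> {} \<Longrightarrow> \<exists>z\<in>W. card {u\<in>W. {u,z} \<in> E} \<le> D"
  shows "\<exists>pos::'v \<Rightarrow> nat. inj_on pos V \<and> (\<forall>v\<in>V. card {u. {u,v} \<in> E \<and> pos u < pos v} \<le> D)"
proof -
  have finV: "finite V" using sg unfolding simple_graph_def by blast
  have "\<exists>pos::'v \<Rightarrow> nat. inj_on pos V \<and> (\<forall>v\<in>V. card {u\<in>V. {u,v} \<in> E \<and> pos u < pos v} \<le> D)"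
    using finV
  proof (induction V rule: finite_remove_induct)
    case empty thus ?case by simp
  next
    case (remove A)
    obtain z where z: "z \<in> A" "card {u\<in>A. {u,z} \<in> E} \<le> D" using deg[OF remove(3) remove(2)] by blast
    obtain pos' :: "'v \<Rightarrow> nat" where p': "inj_on pos' (A - {z})"
      "\<forall>v\<in>A - {z}. card {u\<in>A - {z}. {u,v} \<in> E \<and> pos' u < pos' v} \<le> D"
      using remove(4)[OF z(1)] by (elim exE conjE)
    define M where "M = Suc (\<Sum>u\<in>A - {z}. pos' u)"
    define pos where "pos = pos'(z := M)"
    have lt: "\<And>u. u \<in> A - {z} \<Longrightarrow> pos u < M"
    proof -
      fix u assume u: "u \<in> A - {z}"
      have "pos' u \<le> (\<Sum>u\<in>A - {z}. pos' u)" using remove(1) u by (intro member_le_sum) auto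
      thus "pos u < M" unfolding M_def pos_def using u by simp
    qed
    have pz: "pos z = M" unfolding pos_def by simp
    have inj: "inj_on pos A"
    proof (rule inj_onI)
      fix x y assume x: "x \<in> A" and y: "y \<in> A" and e: "pos x = pos y"
      show "x = y"
      proof (cases "x = z \<or> y = z")
        case True thus ?thesis using lt e pz x y by (metis DiffI less_irrefl singletonD)
      next
        case False
        hence "pos' x = pos' y" using e unfolding pos_def by simp
        thus ?thesis using p'(1) x y False unfolding inj_on_def by blast
      qed
    qed
    have bd: "\<forall>v\<in>A. card {u\<in>A. {u,v} \<in> E \<and> pos u < pos v} \<le> D"
    proof
      fix v assume v: "v \<in> A"
      show "card {u\<in>A. {u,v} \<in> E \<and> pos u < pos v} \<le> D"
      proof (cases "v = z")
        case True
        have "card {u\<in>A. {u,v} \<in> E \<and> pos u < pos v} \<le> card {u\<in>A. {u,z} \<in> E}"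
          using True remove(1) by (intro card_mono) auto
        thus ?thesis using z by simp
      next
        case False
        have "{u\<in>A. {u,v} \<in> E \<and> pos u < pos v} = {u\<in>A - {z}. {u,v} \<in> E \<and> pos' u < pos' v}"
        proof
          show "{u\<in>A. {u,v} \<in> E \<and> pos u < pos v} \<subseteq> {u\<in>A - {z}. {u,v} \<in> E \<and> pos' u < pos' v}"
          proof
            fix u assume u: "u \<in> {u\<in>A. {u,v} \<in> E \<and> pos u < pos v}"
            have vA: "v \<in> A - {z}" using v False by simp
            have "u \<noteq> z" using u lt[OF vA] pz by auto
            thus "u \<in> {u\<in>A - {z}. {u,v} \<in> E \<and> pos' u < pos' v}" using u False unfolding pos_def by auto
          qed
        next
          show "{u\<in>A - {z}. {u,v} \<in> E \<and> pos' u < pos' v} \<subseteq> {u\<in>A. {u,v} \<in> E \<and> pos u < pos v}"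
            using False unfolding pos_def by auto
        qed
        thus ?thesis using p'(2) v False by simp
      qed
    qed
    show ?case using inj bd by blast
  qed
  then obtain pos :: "'v \<Rightarrow> nat" where p: "inj_on pos V" "\<forall>v\<in>V. card {u\<in>V. {u,v} \<in> E \<and> pos u < pos v} \<le> D" by blast
  have "\<forall>v\<in>V. {u. {u,v} \<in> E \<and> pos u < pos v} = {u\<in>V. {u,v} \<in> E \<and> pos u < pos v}"
  proof
    fix v assume "v \<in> V"
    show "{u. {u,v} \<in> E \<and> pos u < pos v} = {u\<in>V. {u,v} \<in> E \<and> pos u < pos v}"
    proof
      show "{u. {u,v} \<in> E \<and> pos u < pos v} \<subseteq> {u\<in>V. {u,v} \<in> E \<and> pos u < pos v}"
      proof
        fix u assume u: "u \<in> {u. {u,v} \<in> E \<and> pos u < pos v}"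
        hence "{u,v} \<in> E" by simp
        then obtain a b where ab: "{u,v} = {a,b}" "a \<in> V" "b \<in> V" using sg_edge[OF sg] by metis
        hence "u \<in> V" by (auto simp: doubleton_eq_iff)
        thus "u \<in> {u\<in>V. {u,v} \<in> E \<and> pos u < pos v}" using u by simp
      qed
    qed blast
  qed
  thus ?thesis using p by auto
qed

definition cntp :: "nat \<Rightarrow> nat" where
  "cntp p = card {q. Factorial_Ring.prime q \<and> 3 < q \<and> q < p}"

lemma cntp_fin: "finite {q::nat. Factorial_Ring.prime q \<and> 3 < q \<and> q < p}"
  by (rule finite_subset[of _ "{..<p}"]) auto

lemma cntp_mono:
  assumes "Factorial_Ring.prime p'" "3 < p'" "p' < p" shows "cntp p' < cntp p"
proof -
  have "{q. Factorial_Ring.prime q \<and> 3 < q \<and> q < p'} \<subset> {q. Factorial_Ring.prime q \<and> 3 < q \<and> q < p}"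
    using assms by auto
  thus ?thesis unfolding cntp_def by (rule psubset_card_mono[OF cntp_fin])
qed

lemma cntp_next:
  assumes "Factorial_Ring.prime p" "3 < p"
  defines "p' \<equiv> LEAST q. Factorial_Ring.prime q \<and> p < q"
  shows "Factorial_Ring.prime p' \<and> p < p' \<and> cntp p' = Suc (cntp p)"
proof -
  have ex: "\<exists>q. Factorial_Ring.prime q \<and> p < q" using bigger_prime by blast
  have pp: "Factorial_Ring.prime p' \<and> p < p'" unfolding p'_def by (rule LeastI_ex[OF ex])
  have mn: "\<And>q. Factorial_Ring.prime q \<Longrightarrow> p < q \<Longrightarrow> p' \<le> q" unfolding p'_def by (rule Least_le) blast
  have "{q. Factorial_Ring.prime q \<and> 3 < q \<and> q < p'} = insert p {q. Factorial_Ring.prime q \<and> 3 < q \<and> q < p}"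
  proof
    show "{q. Factorial_Ring.prime q \<and> 3 < q \<and> q < p'} \<subseteq> insert p {q. Factorial_Ring.prime q \<and> 3 < q \<and> q < p}"
    proof
      fix q assume q: "q \<in> {q. Factorial_Ring.prime q \<and> 3 < q \<and> q < p'}"
      have "\<not> p < q"
      proof
        assume "p < q" hence "p' \<le> q" using mn q by blast
        thus False using q by simp
      qed
      thus "q \<in> insert p {q. Factorial_Ring.prime q \<and> 3 < q \<and> q < p}" using q by auto
    qed
    show "insert p {q. Factorial_Ring.prime q \<and> 3 < q \<and> q < p} \<subseteq> {q. Factorial_Ring.prime q \<and> 3 < q \<and> q < p'}"
      using pp assms(1,2) by auto
  qed
  hence "cntp p' = Suc (cntp p)" unfolding cntp_def using cntp_fin by simp
  thus ?thesis using pp by simp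
qed

lemma cntp_surj: "\<exists>p. Factorial_Ring.prime p \<and> 3 < p \<and> cntp p = j"
proof (induction j)
  case 0
  define p where "p = (LEAST q. Factorial_Ring.prime q \<and> (3::nat) < q)"
  have ex: "\<exists>q. Factorial_Ring.prime q \<and> (3::nat) < q" using bigger_prime by blast
  have pp: "Factorial_Ring.prime p \<and> 3 < p" unfolding p_def by (rule LeastI_ex[OF ex])
  have "{q. Factorial_Ring.prime q \<and> 3 < q \<and> q < p} = {}"
  proof -
    have "\<And>q. Factorial_Ring.prime q \<Longrightarrow> 3 < q \<Longrightarrow> p \<le> q" unfolding p_def by (rule Least_le) blast
    thus ?thesis using not_le by blast
  qed
  hence "cntp p = 0" unfolding cntp_def by simp
  thus ?case using pp by blast
next
  case (Suc j)
  then obtain p where p: "Factorial_Ring.prime p" "3 < p" "cntp p = j" by blast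
  thus ?case using cntp_next[OF p(1,2)] p by (meson less_trans)
qed

lemma fp_props:
  shows "finite (first_primes_gt3 a) \<and> card (first_primes_gt3 a) = a \<and>
    (\<forall>p\<in>first_primes_gt3 a. Factorial_Ring.prime p \<and> 3 < p)"
proof -
  have eq: "first_primes_gt3 a = {p. Factorial_Ring.prime p \<and> 3 < p \<and> cntp p < a}"
    unfolding first_primes_gt3_def cntp_def by simp
  have inj: "inj_on cntp (first_primes_gt3 a)"
  proof (rule inj_onI)
    fix x y assume x: "x \<in> first_primes_gt3 a" and y: "y \<in> first_primes_gt3 a" and e: "cntp x = cntp y"
    show "x = y"
    proof (rule ccontr)
      assume "x \<noteq> y"
      hence "x < y \<or> y < x" by arith
      thus False using cntp_mono x y e unfolding eq by (metis less_irrefl mem_Collect_eq)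
    qed
  qed
  have img: "cntp ` first_primes_gt3 a = {..<a}"
  proof
    show "cntp ` first_primes_gt3 a \<subseteq> {..<a}" unfolding eq by auto
    show "{..<a} \<subseteq> cntp ` first_primes_gt3 a"
    proof
      fix j assume j: "j \<in> {..<a}"
      obtain p where p: "Factorial_Ring.prime p" "3 < p" "cntp p = j" using cntp_surj by blast
      hence "p \<in> first_primes_gt3 a" unfolding eq using j by simp
      thus "j \<in> cntp ` first_primes_gt3 a" using p by blast
    qed
  qed
  have fin: "finite (first_primes_gt3 a)"
    using finite_imageD[of cntp "first_primes_gt3 a"] img inj by simp
  have "card (first_primes_gt3 a) = a" using card_image[OF inj] img by simp
  moreover have "\<forall>p\<in>first_primes_gt3 a. Factorial_Ring.prime p \<and> 3 < p" unfolding eq by simp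
  ultimately show ?thesis using fin by simp
qed

lemma pow5: "4 * a + 1 \<le> (5::nat) ^ a"
  by (induction a) auto

lemma prod_odd: "finite A \<Longrightarrow> (\<forall>p\<in>A. odd (p::nat)) \<Longrightarrow> odd (\<Prod>A)"
  by (induction A rule: finite_induct) auto

lemma prod_ge: "finite A \<Longrightarrow> (\<forall>p\<in>A. (5::nat) \<le> p) \<Longrightarrow> 5 ^ card A \<le> \<Prod>A"
proof (induction A rule: finite_induct)
  case empty thus ?case by simp
next
  case (insert x A)
  hence "5 ^ card A \<le> \<Prod>A" "5 \<le> x" by auto
  hence "5 * 5 ^ card A \<le> x * \<Prod>A" by (intro mult_le_mono) auto
  thus ?case using insert by simp
qed

lemma fp_prod:
  assumes "0 < a"
  shows "odd (\<Prod>(first_primes_gt3 a)) \<and> 4 * a + 1 \<le> \<Prod>(first_primes_gt3 a)"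
proof -
  have P: "finite (first_primes_gt3 a)" "card (first_primes_gt3 a) = a"
    "\<forall>p\<in>first_primes_gt3 a. Factorial_Ring.prime p \<and> 3 < p" using fp_props by blast+
  have od: "\<forall>p\<in>first_primes_gt3 a. odd p" using P(3) prime_odd_nat by auto
  have ge5: "\<forall>p\<in>first_primes_gt3 a. 5 \<le> p"
  proof
    fix p assume p: "p \<in> first_primes_gt3 a"
    hence "odd p" "3 < p" using od P(3) by auto
    thus "5 \<le> p" by presburger
  qed
  have "4 * a + 1 \<le> 5 ^ a" by (rule pow5)
  also have "5 ^ a \<le> \<Prod>(first_primes_gt3 a)" using prod_ge[OF P(1) ge5] P(2) by simp
  finally show ?thesis using prod_odd[OF P(1) od] by simp
qed

theorem corollary7:
  fixes V :: "'v set" and E :: "'v set set" and a :: nat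
  assumes "0 < a"
    and "simple_graph V E"
    and "arboricity E \<le> a"
    and "no_isolated_edges E"
  shows "(\<exists>k. 0 < k \<and> all_groups_of_order_work E k) \<and>
         chi_sigma_g_star E \<le> \<Prod>(first_primes_gt3 a)"
proof -
  define n where "n = \<Prod>(first_primes_gt3 a)"
  define D where "D = 2 * a - 1"
  have np: "odd n" "4 * a + 1 \<le> n" using fp_prod[OF assms(1)] unfolding n_def by auto
  have fd: "forest_decomposition E a" using arb_decomp assms(2,3) by blast
  have deg: "\<And>W. W \<subseteq> V \<Longrightarrow> W \<noteq> {} \<Longrightarrow> \<exists>z\<in>W. card {u\<in>W. {u,z} \<in> E} \<le> D"
    unfolding D_def using degenerate[OF assms(2) fd] assms(1) by simp
  obtain pos :: "'v \<Rightarrow> nat" where pos: "inj_on pos V" "\<forall>v\<in>V. card {u. {u,v} \<in> E \<and> pos u < pos v} \<le> D"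
    using order_exists[OF assms(2) deg] by blast
  have work: "all_groups_of_order_work E n"
    unfolding all_groups_of_order_work_def
  proof (intro allI impI)
    fix Gr :: "nat monoid"
    assume cg: "comm_group Gr" and fin: "finite (carrier Gr)" and cn: "card (carrier Gr) = n"
    have "greedy Gr V E pos D"
      unfolding greedy_def greedy_axioms_def oddgrp_def oddgrp_axioms_def
      using cg fin cn np assms(2,4) pos assms(1) unfolding D_def by auto
    thus "group_sum_colourable Gr E" by (rule greedy.colourable)
  qed
  have n0: "0 < n" using np by simp
  have "chi_sigma_g_star E \<le> n"
    unfolding chi_sigma_g_star_def by (rule Least_le) (use n0 work in blast)
  thus ?thesis using n0 work unfolding n_def by blast
qed


end
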